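(* Let $A=kQ/I$ be a gentle algebra with connected quiver, with ribbon surface $S_A$, marked points $M$ and lamination $L_A$, and let $B_1,\dots,B_n$ be the boundary components of $S_A$. For each $i$ let $b_i$ be the number of marked points on $B_i$, let $l_i$ be the number of endpoints of laminates of $L_A$ lying on $B_i$ (a laminate with both endpoints on $B_i$ counted twice), and let $c_i=l_i-b_i$. Then the AG-invariant of $A$ is given by the multiset of pairs $\{(b_i,c_i):1\le i\le n\}$; that is, $\phi_A(x,y)=\#\{i:(b_i,c_i)=(x,y)\}$. Furthermore, if $b_i\ne0$, then $c_i=\sum_j(k_j-2)$, where $j$ runs over the pieces of $S_A$ cut out by the edges of $\Gamma_A$ that are $k_j$-gons having a side which is a boundary segment of $B_i$.
   Context: $A=kQ/I$ gentle: finite quiver, admissible ideal generated by length-2 paths, each arrow $\alpha$ has at most one $\beta$ with $\alpha\beta\in I$, at most one $\gamma$ with $\gamma\alpha\in I$, at most one $\beta'$ with $\alpha\beta'\notin I$, at most one $\gamma'$ with $\gamma'\alpha\notin I$ (paths composed left to right). $\mathcal M$: maximal paths $w\notin I$; $\mathcal M_0$: trivial paths $e_v$ with $v$ incident to exactly one arrow, or target of exactly one $\alpha$ and source of exactly one $\beta$ with $\alpha\beta\notin I$; $\overline{\mathcal M}=\mathcal M\cup\mathcal M_0$. $\Gamma_A$: marked ribbon graph with vertices $\overline{\mathcal M}$, one half-edge labelled $i$ per passage of $\omega$ through vertex $i$ of $Q$, the two half-edges labelled $i$ forming an edge, cyclic order following $\omega$ (end back to start), marking at the end. $S_A$: its ribbon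 surface (one $2d$-gon per vertex of valency $d$, alternate sides labelled by half-edges, paired sides glued), with $\Gamma_A$ embedded so that its vertices are the marked points $M\subset\partial S_A$. The edges of $\Gamma_A$ cut $S_A$ into polygons, each having either exactly one side on the boundary or enclosing an unmarked boundary component. $L_A$: the lamination with one simple curve (between unmarked boundary points) per vertex $i$ of $Q$, crossing edge $i$ of $\Gamma_A$ once and no other edge. AG-invariant: let $\mathcal F$ be the set of paths $\alpha_1\cdots\alpha_r$ ($r\ge1$) with all $\alpha_j\alpha_{j+1}\in I$, maximal with this property, and $\mathcal F_0=\{e_v\}$ for $v$ incident to exactly one arrow or target of exactly one $\alpha$ and source of exactly one $\beta$ with $\alpha\beta\in I$. Start with $H_0=m_0\in\overline{\mathcal M}$. Given $H_i=m_i$, let $F_i=f_i$ be the unique element of $\mathcal F$ with $t(f_i)=t(m_i)$ such that, if $m_i=p\alpha$ with $\alpha$ an arrow, then $f_i=q\beta$ with $\beta\ne\alpha$ an arrow; if none exists, $f_i=e_{t(m_i)}\in\mathcal F_0$. Let $H_{i+1}=m_{i+1}$ be the unique element of $\mathcal M$ with $s(m_{i+1})=s(f_i)$ such that, if $f_i=\gamma q$ with $\gamma$ an arrow, then $m_{i+1}=\delta r$ with $\delta\ne\gamma$ an arrow; if none exists, $m_{i+1}=e_{s(f_i)}\in\mathcal M_0$. Stop at the first $k$ with $H_k=H_0$ and record the pair $(k,\ell)$, $\ell$ the total number of arrows in $F_0,\dots,F_{k-1}$. Repeat from elements of $\overline{\mathcal M}$ not yet reached until each element of $\overline{\mathcal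 M}$ has occurred once; then add a pair $(0,m)$ for each oriented cycle $\alpha_1\cdots\alpha_m$ with all consecutive compositions (including $\alpha_m\alpha_1$) in $I$, counted up to rotation. $\phi_A:\mathbb N\times\mathbb N\to\mathbb N$ sends $(x,y)$ to the number of recorded pairs equal to $(x,y)$. *)

theory Defs
  imports Main
begin

(* The ideal I is the monomial ideal generated by the length-2 paths
   alpha beta with (alpha, beta) in R.  Paths are composed left to right.
   A path is represented as (v, as): v is its source vertex, as the list
   of arrows (empty list = trivial path e_v). *)

type_synonym ('v,'a) qpath = "'v \<times> 'a list"

definition composable :: "('a \<Rightarrow> 'v) \<Rightarrow> ('a \<Rightarrow> 'v) \<Rightarrow> 'a list \<Rightarrow> bool" where
  "composable s t as \<longleftrightarrow> (\<forall>j. Suc j < length as \<longrightarrow> t (as ! j) = s (as ! Suc j))"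

(* the path does not lie in I *)
definition nonrel :: "('a \<times> 'a) set \<Rightarrow> 'a list \<Rightarrow> bool" where
  "nonrel R as \<longleftrightarrow> (\<forall>j. Suc j < length as \<longrightarrow> (as ! j, as ! Suc j) \<notin> R)"

definition allrel :: "('a \<times> 'a) set \<Rightarrow> 'a list \<Rightarrow> bool" where
  "allrel R as \<longleftrightarrow> (\<forall>j. Suc j < length as \<longrightarrow> (as ! j, as ! Suc j) \<in> R)"

definition is_path :: "'v set \<Rightarrow> 'a set \<Rightarrow> ('a \<Rightarrow> 'v) \<Rightarrow> ('a \<Rightarrow> 'v) \<Rightarrow> ('v,'a) qpath \<Rightarrow> bool" where
  "is_path V E s t p \<longleftrightarrow> fst p \<in> V \<and> set (snd p) \<subseteq> E \<and> composable s t (snd p)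
     \<and> (snd p \<noteq> [] \<longrightarrow> s (hd (snd p)) = fst p)"

definition ptgt :: "('a \<Rightarrow> 'v) \<Rightarrow> ('v,'a) qpath \<Rightarrow> 'v" where
  "ptgt t p = (if snd p = [] then fst p else t (last (snd p)))"

definition indeg :: "'a set \<Rightarrow> ('a \<Rightarrow> 'v) \<Rightarrow> 'v \<Rightarrow> nat" where
  "indeg E t v = card {\<alpha>\<in>E. t \<alpha> = v}"

definition outdeg :: "'a set \<Rightarrow> ('a \<Rightarrow> 'v) \<Rightarrow> 'v \<Rightarrow> nat" where
  "outdeg E s v = card {\<alpha>\<in>E. s \<alpha> = v}"

definition gentle :: "'v set \<Rightarrow> 'a set \<Rightarrow> ('a \<Rightarrow> 'v) \<Rightarrow> ('a \<Rightarrow> 'v) \<Rightarrow> ('a \<times> 'a) set \<Rightarrow> bool" where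
  "gentle V E s t R \<longleftrightarrow>
     finite V \<and> finite E \<and> (\<forall>\<alpha>\<in>E. s \<alpha> \<in> V \<and> t \<alpha> \<in> V)
   \<and> R \<subseteq> {(\<alpha>,\<beta>). \<alpha> \<in> E \<and> \<beta> \<in> E \<and> t \<alpha> = s \<beta>}
   \<and> (\<exists>N. \<forall>as. set as \<subseteq> E \<longrightarrow> composable s t as \<longrightarrow> N \<le> length as \<longrightarrow> \<not> nonrel R as)
   \<and> (\<forall>v\<in>V. outdeg E s v \<le> 2 \<and> indeg E t v \<le> 2)
   \<and> (\<forall>\<alpha>\<in>E. card {\<beta>\<in>E. (\<alpha>,\<beta>) \<in> R} \<le> 1
            \<and> card {\<gamma>\<in>E. (\<gamma>,\<alpha>) \<in> R} \<le> 1
            \<and> card {\<beta>\<in>E. s \<beta> = t \<alpha> \<and> (\<alpha>,\<beta>) \<notin> R} \<le> 1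
            \<and> card {\<gamma>\<in>E. t \<gamma> = s \<alpha> \<and> (\<gamma>,\<alpha>) \<notin> R} \<le> 1)"

definition connected_quiver :: "'v set \<Rightarrow> 'a set \<Rightarrow> ('a \<Rightarrow> 'v) \<Rightarrow> ('a \<Rightarrow> 'v) \<Rightarrow> bool" where
  "connected_quiver V E s t \<longleftrightarrow>
     (\<forall>u\<in>V. \<forall>w\<in>V. (u, w) \<in> ({(s \<alpha>, t \<alpha>) | \<alpha>. \<alpha> \<in> E} \<union> {(t \<alpha>, s \<alpha>) | \<alpha>. \<alpha> \<in> E})\<^sup>*)"

definition max_paths :: "'v set \<Rightarrow> 'a set \<Rightarrow> ('a \<Rightarrow> 'v) \<Rightarrow> ('a \<Rightarrow> 'v) \<Rightarrow> ('a \<times> 'a) set \<Rightarrow> ('v,'a) qpath set" where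
  "max_paths V E s t R = {p. is_path V E s t p \<and> nonrel R (snd p)
      \<and> \<not> (\<exists>\<alpha>\<in>E. s \<alpha> = ptgt t p \<and> nonrel R (snd p @ [\<alpha>]))
      \<and> \<not> (\<exists>\<alpha>\<in>E. t \<alpha> = fst p \<and> nonrel R (\<alpha> # snd p))}"

definition M0 :: "'v set \<Rightarrow> 'a set \<Rightarrow> ('a \<Rightarrow> 'v) \<Rightarrow> ('a \<Rightarrow> 'v) \<Rightarrow> ('a \<times> 'a) set \<Rightarrow> ('v,'a) qpath set" where
  "M0 V E s t R = {(v, []) | v. v \<in> V \<and>
      (indeg E t v + outdeg E s v = 1 \<or>
       (indeg E t v = 1 \<and> outdeg E s v = 1 \<and>
        (\<forall>\<alpha>\<in>E. \<forall>\<beta>\<in>E. t \<alpha> = v \<longrightarrow> s \<beta> = v \<longrightarrow> (\<alpha>,\<beta>) \<notin> R)))}"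

definition Mbar :: "'v set \<Rightarrow> 'a set \<Rightarrow> ('a \<Rightarrow> 'v) \<Rightarrow> ('a \<Rightarrow> 'v) \<Rightarrow> ('a \<times> 'a) set \<Rightarrow> ('v,'a) qpath set" where
  "Mbar V E s t R = max_paths V E s t R \<union> M0 V E s t R"

definition F_paths :: "'v set \<Rightarrow> 'a set \<Rightarrow> ('a \<Rightarrow> 'v) \<Rightarrow> ('a \<Rightarrow> 'v) \<Rightarrow> ('a \<times> 'a) set \<Rightarrow> ('v,'a) qpath set" where
  "F_paths V E s t R = {p. is_path V E s t p \<and> snd p \<noteq> [] \<and> allrel R (snd p)
      \<and> \<not> (\<exists>\<alpha>\<in>E. s \<alpha> = ptgt t p \<and> allrel R (snd p @ [\<alpha>]))
      \<and> \<not> (\<exists>\<alpha>\<in>E. t \<alpha> = fst p \<and> allrel R (\<alpha> # snd p))}"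

definition F_next :: "'v set \<Rightarrow> 'a set \<Rightarrow> ('a \<Rightarrow> 'v) \<Rightarrow> ('a \<Rightarrow> 'v) \<Rightarrow> ('a \<times> 'a) set \<Rightarrow> ('v,'a) qpath \<Rightarrow> ('v,'a) qpath" where
  "F_next V E s t R m =
     (let v = ptgt t m;
          P = (\<lambda>f. f \<in> F_paths V E s t R \<and> ptgt t f = v
                    \<and> (snd m \<noteq> [] \<longrightarrow> last (snd f) \<noteq> last (snd m)))
      in if \<exists>f. P f then (THE f. P f) else (v, []))"

definition M_next :: "'v set \<Rightarrow> 'a set \<Rightarrow> ('a \<Rightarrow> 'v) \<Rightarrow> ('a \<Rightarrow> 'v) \<Rightarrow> ('a \<times> 'a) set \<Rightarrow> ('v,'a) qpath \<Rightarrow> ('v,'a) qpath" where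
  "M_next V E s t R f =
     (let v = fst f;
          P = (\<lambda>m. m \<in> max_paths V E s t R \<and> fst m = v
                    \<and> (snd f \<noteq> [] \<longrightarrow> snd m \<noteq> [] \<and> hd (snd m) \<noteq> hd (snd f)))
      in if \<exists>m. P m then (THE m. P m) else (v, []))"

definition AG_step :: "'v set \<Rightarrow> 'a set \<Rightarrow> ('a \<Rightarrow> 'v) \<Rightarrow> ('a \<Rightarrow> 'v) \<Rightarrow> ('a \<times> 'a) set \<Rightarrow> ('v,'a) qpath \<Rightarrow> ('v,'a) qpath" where
  "AG_step V E s t R m = M_next V E s t R (F_next V E s t R m)"

definition AG_k :: "'v set \<Rightarrow> 'a set \<Rightarrow> ('a \<Rightarrow> 'v) \<Rightarrow> ('a \<Rightarrow> 'v) \<Rightarrow> ('a \<times> 'a) set \<Rightarrow> ('v,'a) qpath \<Rightarrow> nat" where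
  "AG_k V E s t R m = (LEAST k. 0 < k \<and> (AG_step V E s t R ^^ k) m = m)"

definition AG_l :: "'v set \<Rightarrow> 'a set \<Rightarrow> ('a \<Rightarrow> 'v) \<Rightarrow> ('a \<Rightarrow> 'v) \<Rightarrow> ('a \<times> 'a) set \<Rightarrow> ('v,'a) qpath \<Rightarrow> nat" where
  "AG_l V E s t R m = (\<Sum>i < AG_k V E s t R m. length (snd (F_next V E s t R ((AG_step V E s t R ^^ i) m))))"

definition AG_run :: "'v set \<Rightarrow> 'a set \<Rightarrow> ('a \<Rightarrow> 'v) \<Rightarrow> ('a \<Rightarrow> 'v) \<Rightarrow> ('a \<times> 'a) set \<Rightarrow> ('v,'a) qpath \<Rightarrow> ('v,'a) qpath set" where
  "AG_run V E s t R m = (\<lambda>i. (AG_step V E s t R ^^ i) m) ` {..< AG_k V E s t R m}"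

definition full_rel_cycles :: "'a set \<Rightarrow> ('a \<times> 'a) set \<Rightarrow> 'a list set" where
  "full_rel_cycles E R = {cs. cs \<noteq> [] \<and> distinct cs \<and> set cs \<subseteq> E
      \<and> (\<forall>j < length cs. (cs ! j, cs ! (Suc j mod length cs)) \<in> R)}"

definition rot_class :: "'a list \<Rightarrow> 'a list set" where
  "rot_class cs = range (\<lambda>i. rotate i cs)"

definition AG_phi :: "'v set \<Rightarrow> 'a set \<Rightarrow> ('a \<Rightarrow> 'v) \<Rightarrow> ('a \<Rightarrow> 'v) \<Rightarrow> ('a \<times> 'a) set \<Rightarrow> nat \<Rightarrow> nat \<Rightarrow> nat" where
  "AG_phi V E s t R x y =
     card (AG_run V E s t R ` {m \<in> Mbar V E s t R. AG_k V E s t R m = x \<and> AG_l V E s t R m = y})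
   + (if x = 0 then card (rot_class ` {cs \<in> full_rel_cycles E R. length cs = y}) else 0)"

(* ---- The marked ribbon graph Gamma_A and its ribbon surface (combinatorially) ----
   Half-edges: (m, p) with m in Mbar and p the index of the p-th passage of m
   through a vertex of Q (p = 0 .. length m). *)

definition half_edges :: "'v set \<Rightarrow> 'a set \<Rightarrow> ('a \<Rightarrow> 'v) \<Rightarrow> ('a \<Rightarrow> 'v) \<Rightarrow> ('a \<times> 'a) set \<Rightarrow> (('v,'a) qpath \<times> nat) set" where
  "half_edges V E s t R = {h. fst h \<in> Mbar V E s t R \<and> snd h \<le> length (snd (fst h))}"

definition he_label :: "('a \<Rightarrow> 'v) \<Rightarrow> ('v,'a) qpath \<times> nat \<Rightarrow> 'v" where
  "he_label t h = (if snd h = 0 then fst (fst h) else t (snd (fst h) ! (snd h - 1)))"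

(* cyclic order at a vertex of Gamma_A: follows the path, end back to start *)
definition he_next :: "('v,'a) qpath \<times> nat \<Rightarrow> ('v,'a) qpath \<times> nat" where
  "he_next h = (fst h, if snd h = length (snd (fst h)) then 0 else Suc (snd h))"

(* the corner (h, he_next h) carries the marking iff h is the last passage *)
definition he_marked :: "('v,'a) qpath \<times> nat \<Rightarrow> bool" where
  "he_marked h \<longleftrightarrow> snd h = length (snd (fst h))"

definition he_partner :: "'v set \<Rightarrow> 'a set \<Rightarrow> ('a \<Rightarrow> 'v) \<Rightarrow> ('a \<Rightarrow> 'v) \<Rightarrow> ('a \<times> 'a) set \<Rightarrow> ('v,'a) qpath \<times> nat \<Rightarrow> ('v,'a) qpath \<times> nat" where
  "he_partner V E s t R h = (SOME h'. h' \<in> half_edges V E s t R \<and> h' \<noteq> h \<and> he_label t h' = he_label t h)"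

(* boundary walk of the ribbon surface: from corner (h, next h) follow the edge
   of next h to the next corner *)
definition face :: "'v set \<Rightarrow> 'a set \<Rightarrow> ('a \<Rightarrow> 'v) \<Rightarrow> ('a \<Rightarrow> 'v) \<Rightarrow> ('a \<times> 'a) set \<Rightarrow> ('v,'a) qpath \<times> nat \<Rightarrow> ('v,'a) qpath \<times> nat" where
  "face V E s t R h = he_partner V E s t R (he_next h)"

(* boundary components of S_A, each given as its set of corners *)
definition bdry_comps :: "'v set \<Rightarrow> 'a set \<Rightarrow> ('a \<Rightarrow> 'v) \<Rightarrow> ('a \<Rightarrow> 'v) \<Rightarrow> ('a \<times> 'a) set \<Rightarrow> (('v,'a) qpath \<times> nat) set set" where
  "bdry_comps V E s t R = (\<lambda>h. range (\<lambda>n. (face V E s t R ^^ n) h)) ` half_edges V E s t R"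

definition n_marked :: "(('v,'a) qpath \<times> nat) set \<Rightarrow> nat" where
  "n_marked B = card {h \<in> B. he_marked h}"

(* The laminate of vertex i crosses the edge
   formed by the two half-edges labelled i; its endpoint on the side of that
   edge belonging to half-edge h lies on the boundary component containing the
   corner preceding h.  So endpoints correspond to half-edges h = he_next c, c in B. *)
definition n_lam_ends :: "'v set \<Rightarrow> 'a set \<Rightarrow> ('a \<Rightarrow> 'v) \<Rightarrow> ('a \<Rightarrow> 'v) \<Rightarrow> ('a \<times> 'a) set \<Rightarrow> (('v,'a) qpath \<times> nat) set \<Rightarrow> nat" where
  "n_lam_ends V E s t R B = card {h \<in> half_edges V E s t R. \<exists>c\<in>B. he_next c = h}"

definition c_val :: "'v set \<Rightarrow> 'a set \<Rightarrow> ('a \<Rightarrow> 'v) \<Rightarrow> ('a \<Rightarrow> 'v) \<Rightarrow> ('a \<times> 'a) set \<Rightarrow> (('v,'a) qpath \<times> nat) set \<Rightarrow> int" where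
  "c_val V E s t R B = int (n_lam_ends V E s t R B) - int (n_marked B)"

(* the piece of S_A cut out by Gamma_A whose boundary side starts at the marked
   corner c: it has as sides the edges traversed until the next marked corner
   plus one boundary segment; this is its number of sides k *)
definition piece_sides :: "'v set \<Rightarrow> 'a set \<Rightarrow> ('a \<Rightarrow> 'v) \<Rightarrow> ('a \<Rightarrow> 'v) \<Rightarrow> ('a \<times> 'a) set \<Rightarrow> ('v,'a) qpath \<times> nat \<Rightarrow> nat" where
  "piece_sides V E s t R c = (LEAST n. 0 < n \<and> he_marked ((face V E s t R ^^ n) c)) + 1"

end

theory Submission
  imports Defs
begin

definition chn :: "('a \<Rightarrow> 'a \<Rightarrow> bool) \<Rightarrow> 'a list \<Rightarrow> bool" where
  "chn Q xs \<longleftrightarrow> (\<forall>j. Suc j < length xs \<longrightarrow> Q (xs!j) (xs!Suc j))"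

locale qchain =
  fixes Q :: "'a \<Rightarrow> 'a \<Rightarrow> bool"
  assumes su: "Q a b \<Longrightarrow> Q a b' \<Longrightarrow> b = b'"
      and pu: "Q a b \<Longrightarrow> Q a' b \<Longrightarrow> a = a'"
begin

definition maxc where
  "maxc xs \<longleftrightarrow> xs \<noteq> [] \<and> chn Q xs \<and> (\<forall>b. \<not> Q (last xs) b) \<and> (\<forall>a. \<not> Q a (hd xs))"

lemma sync_fw:
  assumes "chn Q xs" "chn Q ys" "xs!i = ys!j"
  shows "i+d < length xs \<Longrightarrow> j+d < length ys \<Longrightarrow> xs!(i+d) = ys!(j+d)"
proof (induction d)
  case 0 then show ?case using assms by simp
next
  case (Suc d)
  have "xs!(i+d) = ys!(j+d)" using Suc by simp
  moreover have "Q (xs!(i+d)) (xs!Suc(i+d))" using assms(1) Suc.prems unfolding chn_def by auto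
  moreover have "Q (ys!(j+d)) (ys!Suc(j+d))" using assms(2) Suc.prems unfolding chn_def by auto
  ultimately show ?case using su by fastforce
qed

lemma sync_bw:
  assumes "chn Q xs" "chn Q ys" "xs!i = ys!j" "i < length xs" "j < length ys"
  shows "d \<le> i \<Longrightarrow> d \<le> j \<Longrightarrow> xs!(i-d) = ys!(j-d)"
proof (induction d)
  case 0 then show ?case using assms by simp
next
  case (Suc d)
  have "xs!(i-d) = ys!(j-d)" using Suc by simp
  moreover have "Q (xs!(i - Suc d)) (xs!Suc(i - Suc d))" using assms(1,4) Suc.prems unfolding chn_def by auto
  moreover have "Q (ys!(j - Suc d)) (ys!Suc(j - Suc d))" using assms(2,5) Suc.prems unfolding chn_def by auto
  moreover have "Suc (i - Suc d) = i - d" "Suc (j - Suc d) = j - d" using Suc.prems by auto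
  ultimately show ?case using pu by metis
qed

lemma max_uniq:
  assumes mx: "maxc xs" and my: "maxc ys" and i: "i < length xs" and j: "j < length ys"
    and eq: "xs!i = ys!j"
  shows "i = j \<and> xs = ys"
proof -
  have cx: "chn Q xs" and cy: "chn Q ys" using mx my unfolding maxc_def by auto
  have L: "length xs - i = length ys - j"
  proof (rule ccontr)
    assume "length xs - i \<noteq> length ys - j"
    then consider "length xs - i < length ys - j" | "length ys - j < length xs - i" by linarith
    then show False
    proof cases
      case 1
      define d where "d = length xs - 1 - i"
      have "xs!(i+d) = ys!(j+d)" by (rule sync_fw[OF cx cy eq]) (use 1 i j d_def in auto)
      moreover have "xs!(i+d) = last xs" using i d_def by (subst last_conv_nth) auto
      moreover have "Q (ys!(j+d)) (ys!Suc(j+d))" using cy 1 d_def i unfolding chn_def by auto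
      ultimately show False using mx unfolding maxc_def by metis
    next
      case 2
      define d where "d = length ys - 1 - j"
      have "ys!(j+d) = xs!(i+d)" by (rule sync_fw[OF cy cx eq[symmetric]]) (use 2 i j d_def in auto)
      moreover have "ys!(j+d) = last ys" using j d_def by (subst last_conv_nth) auto
      moreover have "Q (xs!(i+d)) (xs!Suc(i+d))" using cx 2 d_def j unfolding chn_def by auto
      ultimately show False using my unfolding maxc_def by metis
    qed
  qed
  have I: "i = j"
  proof (rule ccontr)
    assume "i \<noteq> j"
    then consider "i < j" | "j < i" by linarith
    then show False
    proof cases
      case 1
      have "xs!(i-i) = ys!(j-i)" by (rule sync_bw[OF cx cy eq i j]) (use 1 in auto)
      moreover have "Q (ys!(j-i-1)) (ys!Suc(j-i-1))" using cy 1 j unfolding chn_def by auto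
      moreover have "Suc (j-i-1) = j - i" using 1 by auto
      moreover have "xs!0 = hd xs" using mx unfolding maxc_def by (simp add: hd_conv_nth)
      ultimately show False using mx unfolding maxc_def by (metis diff_self_eq_0)
    next
      case 2
      have "ys!(j-j) = xs!(i-j)" by (rule sync_bw[OF cy cx eq[symmetric] j i]) (use 2 in auto)
      moreover have "Q (xs!(i-j-1)) (xs!Suc(i-j-1))" using cx 2 i unfolding chn_def by auto
      moreover have "Suc (i-j-1) = i - j" using 2 by auto
      moreover have "ys!0 = hd ys" using my unfolding maxc_def by (simp add: hd_conv_nth)
      ultimately show False using my unfolding maxc_def by (metis diff_self_eq_0)
    qed
  qed
  have len: "length xs = length ys" using L I i j by auto
  have "xs = ys"
  proof (rule nth_equalityI)
    show "length xs = length ys" by (rule len)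
    fix k assume k: "k < length xs"
    show "xs!k = ys!k"
    proof (cases "i \<le> k")
      case True
      then show ?thesis using sync_fw[OF cx cy eq, of "k-i"] I k len by auto
    next
      case False
      then show ?thesis using sync_bw[OF cx cy eq i j, of "i-k"] I k len by auto
    qed
  qed
  then show ?thesis using I by simp
qed

lemma distinct_nosucc:
  assumes c: "chn Q xs" and ne: "xs \<noteq> []" and ns: "\<forall>b. \<not> Q (last xs) b"
  shows "distinct xs"
proof (rule ccontr)
  assume "\<not> distinct xs"
  then obtain i j where ij: "i < j" "j < length xs" "xs!i = xs!j"
    by (metis distinct_conv_nth linorder_neqE_nat)
  define d where "d = length xs - 1 - j"
  have "xs!(i+d) = xs!(j+d)" by (rule sync_fw[OF c c ij(3)]) (use ij d_def in auto)
  moreover have "xs!(j+d) = last xs" using ij d_def by (subst last_conv_nth) auto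
  moreover have "Q (xs!(i+d)) (xs!Suc(i+d))" using c ij d_def unfolding chn_def by auto
  ultimately show False using ns by metis
qed

end

lemma chn_Cons: "chn Q (a#xs) \<longleftrightarrow> chn Q xs \<and> (xs \<noteq> [] \<longrightarrow> Q a (hd xs))"
proof
  assume H: "chn Q (a#xs)"
  have "chn Q xs" unfolding chn_def
  proof (intro allI impI)
    fix j assume "Suc j < length xs"
    then show "Q (xs!j) (xs!Suc j)" using H[unfolded chn_def, rule_format, of "Suc j"] by simp
  qed
  moreover have "xs \<noteq> [] \<longrightarrow> Q a (hd xs)"
    using H[unfolded chn_def, rule_format, of 0] by (cases xs) auto
  ultimately show "chn Q xs \<and> (xs \<noteq> [] \<longrightarrow> Q a (hd xs))" by simp
next
  assume H: "chn Q xs \<and> (xs \<noteq> [] \<longrightarrow> Q a (hd xs))"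
  show "chn Q (a#xs)" unfolding chn_def
  proof (intro allI impI)
    fix j assume j: "Suc j < length (a#xs)"
    show "Q ((a#xs)!j) ((a#xs)!Suc j)"
    proof (cases j)
      case 0 then show ?thesis using H j by (cases xs) auto
    next
      case (Suc k) then show ?thesis using H j unfolding chn_def by auto
    qed
  qed
qed

lemma chn_snoc: "chn Q (xs@[b]) \<longleftrightarrow> chn Q xs \<and> (xs \<noteq> [] \<longrightarrow> Q (last xs) b)"
proof
  assume H: "chn Q (xs@[b])"
  have "chn Q xs" unfolding chn_def
  proof (intro allI impI)
    fix j assume j: "Suc j < length xs"
    then show "Q (xs!j) (xs!Suc j)" using H[unfolded chn_def, rule_format, of j]
      by (simp add: nth_append)
  qed
  moreover have "xs \<noteq> [] \<longrightarrow> Q (last xs) b"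
  proof
    assume ne: "xs \<noteq> []"
    have "Q ((xs@[b])!(length xs - 1)) ((xs@[b])!Suc (length xs - 1))"
      using H[unfolded chn_def, rule_format, of "length xs - 1"] ne by simp
    then show "Q (last xs) b" using ne by (simp add: nth_append last_conv_nth)
  qed
  ultimately show "chn Q xs \<and> (xs \<noteq> [] \<longrightarrow> Q (last xs) b)" by simp
next
  assume H: "chn Q xs \<and> (xs \<noteq> [] \<longrightarrow> Q (last xs) b)"
  show "chn Q (xs@[b])" unfolding chn_def
  proof (intro allI impI)
    fix j assume j: "Suc j < length (xs@[b])"
    show "Q ((xs@[b])!j) ((xs@[b])!Suc j)"
    proof (cases "Suc j < length xs")
      case True then show ?thesis using H unfolding chn_def by (simp add: nth_append)
    next
      case False
      then have jj: "j = length xs - 1" "xs \<noteq> []" using j by auto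
      then show ?thesis using H by (auto simp: nth_append last_conv_nth)
    qed
  qed
qed

lemma chn_conj: "chn (\<lambda>a b. P a b \<and> Q a b) xs \<longleftrightarrow> chn P xs \<and> chn Q xs"
  unfolding chn_def by auto

lemma chn_mono: "(\<And>a b. P a b \<Longrightarrow> Q a b) \<Longrightarrow> chn P xs \<Longrightarrow> chn Q xs"
  unfolding chn_def by auto

lemma composable_chn: "composable s t xs = chn (\<lambda>a b. t a = s b) xs"
  unfolding composable_def chn_def by simp
lemma nonrel_chn: "nonrel R xs = chn (\<lambda>a b. (a,b) \<notin> R) xs"
  unfolding nonrel_def chn_def by simp
lemma allrel_chn: "allrel R xs = chn (\<lambda>a b. (a,b) \<in> R) xs"
  unfolding allrel_def chn_def by simp

lemma card_le1_eq: "finite S \<Longrightarrow> card S \<le> 1 \<Longrightarrow> x \<in> S \<Longrightarrow> y \<in> S \<Longrightarrow> x = y"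
  using card_le_Suc0_iff_eq[of S] by auto

locale gent =
  fixes V :: "'v set" and E :: "'a set" and s t :: "'a \<Rightarrow> 'v" and R :: "('a \<times> 'a) set"
  assumes gen: "gentle V E s t R" and con: "connected_quiver V E s t" and Ene: "E \<noteq> {}"
begin

definition Qn where "Qn a b \<longleftrightarrow> a \<in> E \<and> b \<in> E \<and> t a = s b \<and> (a,b) \<notin> R"
definition Qr where "Qr a b \<longleftrightarrow> (a,b) \<in> R"

lemma finV: "finite V" and finE: "finite E" and sV: "a \<in> E \<Longrightarrow> s a \<in> V" and tV: "a \<in> E \<Longrightarrow> t a \<in> V"
  using gen unfolding gentle_def by auto

lemma Rsub: "(a,b) \<in> R \<Longrightarrow> a \<in> E \<and> b \<in> E \<and> t a = s b"
  using gen unfolding gentle_def by auto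

lemma deg: "v \<in> V \<Longrightarrow> card {a\<in>E. s a = v} \<le> 2 \<and> card {a\<in>E. t a = v} \<le> 2"
  using gen unfolding gentle_def outdeg_def indeg_def by auto

lemma cards: "a \<in> E \<Longrightarrow> card {b\<in>E. (a,b) \<in> R} \<le> 1 \<and> card {c\<in>E. (c,a) \<in> R} \<le> 1
            \<and> card {b\<in>E. s b = t a \<and> (a,b) \<notin> R} \<le> 1
            \<and> card {c\<in>E. t c = s a \<and> (c,a) \<notin> R} \<le> 1"
  using gen unfolding gentle_def by blast

lemma adm: "\<exists>N. \<forall>as. set as \<subseteq> E \<longrightarrow> composable s t as \<longrightarrow> N \<le> length as \<longrightarrow> \<not> nonrel R as"
  using gen unfolding gentle_def by blast

sublocale n: qchain Qn
proof
  fix a b b' assume "Qn a b" "Qn a b'"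
  then show "b = b'" using cards[of a] finE unfolding Qn_def
    by (intro card_le1_eq[of "{b\<in>E. s b = t a \<and> (a,b) \<notin> R}"]) auto
next
  fix a a' b assume "Qn a b" "Qn a' b"
  then show "a = a'" using cards[of b] finE unfolding Qn_def
    by (intro card_le1_eq[of "{c\<in>E. t c = s b \<and> (c,b) \<notin> R}"]) auto
qed

sublocale r: qchain Qr
proof
  fix a b b' assume "Qr a b" "Qr a b'"
  then show "b = b'" using cards[of a] finE Rsub unfolding Qr_def
    by (intro card_le1_eq[of "{b\<in>E. (a,b) \<in> R}"]) auto
next
  fix a a' b assume "Qr a b" "Qr a' b"
  then show "a = a'" using cards[of b] finE Rsub unfolding Qr_def
    by (intro card_le1_eq[of "{c\<in>E. (c,b) \<in> R}"]) auto
qed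

lemma no_isolated: assumes "v \<in> V" shows "\<exists>a\<in>E. s a = v \<or> t a = v"
proof -
  obtain a0 where a0: "a0 \<in> E" using Ene by auto
  let ?G = "{(s \<alpha>, t \<alpha>) | \<alpha>. \<alpha> \<in> E} \<union> {(t \<alpha>, s \<alpha>) | \<alpha>. \<alpha> \<in> E}"
  have "(v, s a0) \<in> ?G\<^sup>*" using con assms sV[OF a0] unfolding connected_quiver_def by blast
  then show ?thesis
  proof (cases rule: converse_rtranclE)
    case base then show ?thesis using a0 by auto
  next
    case (step w) then show ?thesis by auto
  qed
qed

lemma chn_Qn: "chn Qn xs \<longleftrightarrow> (length xs \<ge> 2 \<longrightarrow> set xs \<subseteq> E) \<and> composable s t xs \<and> nonrel R xs"
proof
  assume H: "chn Qn xs"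
  have "length xs \<ge> 2 \<longrightarrow> set xs \<subseteq> E"
  proof
    assume L: "length xs \<ge> 2"
    show "set xs \<subseteq> E"
    proof
      fix x assume "x \<in> set xs"
      then obtain i where i: "i < length xs" "xs!i = x" by (metis in_set_conv_nth)
      show "x \<in> E"
      proof (cases "Suc i < length xs")
        case True then show ?thesis using H i unfolding chn_def Qn_def by auto
      next
        case False
        then have "Suc (i - 1) < length xs" "Suc (i-1) = i" using i L by auto
        then show ?thesis using H i unfolding chn_def Qn_def by metis
      qed
    qed
  qed
  moreover have "composable s t xs" "nonrel R xs" using H unfolding chn_def composable_def nonrel_def Qn_def by auto
  ultimately show "(length xs \<ge> 2 \<longrightarrow> set xs \<subseteq> E) \<and> composable s t xs \<and> nonrel R xs" by simp
next
  assume H: "(length xs \<ge> 2 \<longrightarrow> set xs \<subseteq> E) \<and> composable s t xs \<and> nonrel R xs"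
  show "chn Qn xs" unfolding chn_def Qn_def
  proof (intro allI impI)
    fix j assume j: "Suc j < length xs"
    then have "length xs \<ge> 2" by simp
    then have "set xs \<subseteq> E" using H by simp
    then show "xs ! j \<in> E \<and> xs ! Suc j \<in> E \<and> t (xs ! j) = s (xs ! Suc j) \<and> (xs ! j, xs ! Suc j) \<notin> R"
      using H j unfolding composable_def nonrel_def by auto
  qed
qed

lemma chn_Qr: "chn Qr xs \<longleftrightarrow> allrel R xs"
  unfolding chn_def allrel_def Qr_def by simp

lemma chn_Qr_comp: "chn Qr xs \<Longrightarrow> composable s t xs"
  unfolding chn_def composable_def Qr_def using Rsub by auto

lemma chn_Qr_E: "chn Qr xs \<Longrightarrow> length xs \<ge> 2 \<Longrightarrow> set xs \<subseteq> E"
proof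
  fix x assume H: "chn Qr xs" and L: "length xs \<ge> 2" and "x \<in> set xs"
  then obtain i where i: "i < length xs" "xs!i = x" by (metis in_set_conv_nth)
  show "x \<in> E"
  proof (cases "Suc i < length xs")
    case True then show ?thesis using H i Rsub unfolding chn_def Qr_def by blast
  next
    case False
    then have "Suc (i - 1) < length xs" "Suc (i-1) = i" using i L by auto
    then show ?thesis using H i Rsub unfolding chn_def Qr_def by metis
  qed
qed

end

context gent begin

abbreviation "MP \<equiv> max_paths V E s t R"
abbreviation "MB \<equiv> Mbar V E s t R"
abbreviation "FP \<equiv> F_paths V E s t R"
abbreviation "HE \<equiv> half_edges V E s t R"
abbreviation "MZ \<equiv> M0 V E s t R"

lemma mp_triv: "(v, []) \<notin> MP"
proof
  assume H: "(v, []) \<in> MP"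
  then have "v \<in> V" unfolding max_paths_def is_path_def by auto
  then obtain a where "a \<in> E" "s a = v \<or> t a = v" using no_isolated by blast
  then show False using H unfolding max_paths_def ptgt_def nonrel_def by auto
qed

lemma mp_char: "p \<in> MP \<longleftrightarrow> snd p \<noteq> [] \<and> n.maxc (snd p) \<and> set (snd p) \<subseteq> E \<and> fst p = s (hd (snd p))"
proof
  assume H: "p \<in> MP"
  obtain v xs where p: "p = (v, xs)" by (cases p)
  have ne: "xs \<noteq> []" using H mp_triv p by auto
  have ip: "v \<in> V" "set xs \<subseteq> E" "composable s t xs" "s (hd xs) = v" "nonrel R xs"
    using H ne p unfolding max_paths_def is_path_def by auto
  have c: "chn Qn xs" using ip chn_Qn by auto
  have "\<forall>b. \<not> Qn (last xs) b"
  proof (intro allI notI)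
    fix b assume q: "Qn (last xs) b"
    then have "nonrel R (xs @ [b])" using ip ne unfolding nonrel_chn chn_snoc Qn_def by auto
    moreover have "b \<in> E" "s b = ptgt t p" using q ne p unfolding Qn_def ptgt_def by auto
    ultimately show False using H p unfolding max_paths_def by auto
  qed
  moreover have "\<forall>a. \<not> Qn a (hd xs)"
  proof (intro allI notI)
    fix a assume q: "Qn a (hd xs)"
    then have "nonrel R (a # xs)" using ip ne unfolding nonrel_chn chn_Cons Qn_def by auto
    moreover have "a \<in> E" "t a = fst p" using q ne p ip unfolding Qn_def by auto
    ultimately show False using H p unfolding max_paths_def by auto
  qed
  ultimately show "snd p \<noteq> [] \<and> n.maxc (snd p) \<and> set (snd p) \<subseteq> E \<and> fst p = s (hd (snd p))"
    using ne c ip p unfolding n.maxc_def by auto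
next
  assume H: "snd p \<noteq> [] \<and> n.maxc (snd p) \<and> set (snd p) \<subseteq> E \<and> fst p = s (hd (snd p))"
  obtain v xs where p: "p = (v, xs)" by (cases p)
  have ne: "xs \<noteq> []" and m: "n.maxc xs" and E: "set xs \<subseteq> E" and v: "v = s (hd xs)" using H p by auto
  have c: "chn Qn xs" using m unfolding n.maxc_def by auto
  have ip: "composable s t xs" "nonrel R xs" using c chn_Qn by auto
  have hE: "hd xs \<in> E" using ne E by auto
  have lE: "last xs \<in> E" using ne E by auto
  have pth: "is_path V E s t p" using p ip E v sV[OF hE] unfolding is_path_def by auto
  have n1: "\<not> (\<exists>\<alpha>\<in>E. s \<alpha> = ptgt t p \<and> nonrel R (snd p @ [\<alpha>]))"
  proof
    assume "\<exists>\<alpha>\<in>E. s \<alpha> = ptgt t p \<and> nonrel R (snd p @ [\<alpha>])"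
    then obtain b where b: "b \<in> E" "s b = t (last xs)" "nonrel R (xs @ [b])"
      using p ne unfolding ptgt_def by auto
    then have "(last xs, b) \<notin> R" using ne unfolding nonrel_chn chn_snoc by auto
    then have "Qn (last xs) b" using b lE unfolding Qn_def by auto
    then show False using m unfolding n.maxc_def by auto
  qed
  have n2: "\<not> (\<exists>\<alpha>\<in>E. t \<alpha> = fst p \<and> nonrel R (\<alpha> # snd p))"
  proof
    assume "\<exists>\<alpha>\<in>E. t \<alpha> = fst p \<and> nonrel R (\<alpha> # snd p)"
    then obtain a where b: "a \<in> E" "t a = s (hd xs)" "nonrel R (a # xs)"
      using p v by auto
    then have "(a, hd xs) \<notin> R" using ne unfolding nonrel_chn chn_Cons by auto
    then have "Qn a (hd xs)" using b hE unfolding Qn_def by auto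
    then show False using m unfolding n.maxc_def by auto
  qed
  show "p \<in> MP" unfolding max_paths_def using pth ip p n1 n2 by auto
qed

lemma fp_char: "f \<in> FP \<longleftrightarrow> snd f \<noteq> [] \<and> r.maxc (snd f) \<and> set (snd f) \<subseteq> E \<and> fst f = s (hd (snd f))"
proof
  assume H: "f \<in> FP"
  obtain v xs where p: "f = (v, xs)" by (cases f)
  have ne: "xs \<noteq> []" using H p unfolding F_paths_def by auto
  have ip: "v \<in> V" "set xs \<subseteq> E" "composable s t xs" "s (hd xs) = v" "allrel R xs"
    using H ne p unfolding F_paths_def is_path_def by auto
  have c: "chn Qr xs" using ip chn_Qr by auto
  have "\<forall>b. \<not> Qr (last xs) b"
  proof (intro allI notI)
    fix b assume q: "Qr (last xs) b"
    then have "allrel R (xs @ [b])" using ip ne unfolding allrel_chn chn_snoc Qr_def by auto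
    moreover have "b \<in> E" "s b = ptgt t f" using q ne p Rsub unfolding Qr_def ptgt_def by auto
    ultimately show False using H p unfolding F_paths_def by auto
  qed
  moreover have "\<forall>a. \<not> Qr a (hd xs)"
  proof (intro allI notI)
    fix a assume q: "Qr a (hd xs)"
    then have "allrel R (a # xs)" using ip ne unfolding allrel_chn chn_Cons Qr_def by auto
    moreover have "a \<in> E" "t a = fst f" using q ne p ip Rsub unfolding Qr_def by auto
    ultimately show False using H p unfolding F_paths_def by auto
  qed
  ultimately show "snd f \<noteq> [] \<and> r.maxc (snd f) \<and> set (snd f) \<subseteq> E \<and> fst f = s (hd (snd f))"
    using ne c ip p unfolding r.maxc_def by auto
next
  assume H: "snd f \<noteq> [] \<and> r.maxc (snd f) \<and> set (snd f) \<subseteq> E \<and> fst f = s (hd (snd f))"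
  obtain v xs where p: "f = (v, xs)" by (cases f)
  have ne: "xs \<noteq> []" and m: "r.maxc xs" and E: "set xs \<subseteq> E" and v: "v = s (hd xs)" using H p by auto
  have c: "chn Qr xs" using m unfolding r.maxc_def by auto
  have ip: "composable s t xs" "allrel R xs" using c chn_Qr chn_Qr_comp by auto
  have hE: "hd xs \<in> E" using ne E by auto
  have pth: "is_path V E s t f" using p ip E v sV[OF hE] unfolding is_path_def by auto
  have n1: "\<not> (\<exists>\<alpha>\<in>E. s \<alpha> = ptgt t f \<and> allrel R (snd f @ [\<alpha>]))"
  proof
    assume "\<exists>\<alpha>\<in>E. s \<alpha> = ptgt t f \<and> allrel R (snd f @ [\<alpha>])"
    then obtain b where b: "allrel R (xs @ [b])" using p by auto
    then have "Qr (last xs) b" using ne unfolding allrel_chn chn_snoc Qr_def by auto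
    then show False using m unfolding r.maxc_def by auto
  qed
  have n2: "\<not> (\<exists>\<alpha>\<in>E. t \<alpha> = fst f \<and> allrel R (\<alpha> # snd f))"
  proof
    assume "\<exists>\<alpha>\<in>E. t \<alpha> = fst f \<and> allrel R (\<alpha> # snd f)"
    then obtain a where b: "allrel R (a # xs)" using p by auto
    then have "Qr a (hd xs)" using ne unfolding allrel_chn chn_Cons Qr_def by auto
    then show False using m unfolding r.maxc_def by auto
  qed
  show "f \<in> FP" unfolding F_paths_def using pth ip p n1 n2 ne by auto
qed

lemma exists_maxpath:
  assumes a: "a \<in> E"
  shows "\<exists>xs i. n.maxc xs \<and> set xs \<subseteq> E \<and> i < length xs \<and> xs!i = a"
proof -
  obtain N where N: "\<forall>as. set as \<subseteq> E \<longrightarrow> composable s t as \<longrightarrow> N \<le> length as \<longrightarrow> \<not> nonrel R as"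
    using adm by blast
  let ?P = "\<lambda>xs. chn Qn xs \<and> set xs \<subseteq> E \<and> a \<in> set xs"
  have P0: "?P [a]" using a unfolding chn_def by auto
  have bnd: "\<forall>y. ?P y \<longrightarrow> length y < N"
  proof (intro allI impI)
    fix y assume "?P y"
    then have "set y \<subseteq> E" "composable s t y" "nonrel R y" using chn_Qn by auto
    then show "length y < N" using N by force
  qed
  obtain xs where xs: "?P xs" and mx: "\<forall>y. ?P y \<longrightarrow> length y \<le> length xs"
    using ex_has_greatest_nat[of ?P "[a]" length N, OF P0 bnd] by blast
  have ne: "xs \<noteq> []" using xs by auto
  have "\<forall>b. \<not> Qn (last xs) b"
  proof (intro allI notI)
    fix b assume q: "Qn (last xs) b"
    then have "?P (xs @ [b])" using xs ne unfolding chn_snoc Qn_def by auto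
    then show False using mx by fastforce
  qed
  moreover have "\<forall>b. \<not> Qn b (hd xs)"
  proof (intro allI notI)
    fix b assume q: "Qn b (hd xs)"
    then have "?P (b # xs)" using xs ne unfolding chn_Cons Qn_def by auto
    then show False using mx by fastforce
  qed
  ultimately have "n.maxc xs" using xs ne unfolding n.maxc_def by auto
  then show ?thesis using xs by (metis in_set_conv_nth)
qed

lemma exists_fpath:
  assumes a: "a \<in> E" and ns: "\<forall>b. \<not> Qr a b"
  shows "\<exists>xs. r.maxc xs \<and> set xs \<subseteq> E \<and> last xs = a"
proof -
  let ?P = "\<lambda>xs. chn Qr xs \<and> set xs \<subseteq> E \<and> xs \<noteq> [] \<and> last xs = a"
  have P0: "?P [a]" using a unfolding chn_def by auto
  have bnd: "\<forall>y. ?P y \<longrightarrow> length y < card E + 1"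
  proof (intro allI impI)
    fix y assume H: "?P y"
    then have "distinct y" using r.distinct_nosucc ns by auto
    then have "length y = card (set y)" by (simp add: distinct_card)
    also have "\<dots> \<le> card E" using H finE by (simp add: card_mono)
    finally show "length y < card E + 1" by simp
  qed
  obtain xs where xs: "?P xs" and mx: "\<forall>y. ?P y \<longrightarrow> length y \<le> length xs"
    using ex_has_greatest_nat[of ?P "[a]" length "card E + 1", OF P0 bnd] by blast
  have ne: "xs \<noteq> []" using xs by auto
  have "\<forall>b. \<not> Qr b (hd xs)"
  proof (intro allI notI)
    fix b assume q: "Qr b (hd xs)"
    then have "?P (b # xs)" using xs ne Rsub unfolding chn_Cons Qr_def by auto
    then show False using mx by fastforce
  qed
  then have "r.maxc xs" using xs ne ns unfolding r.maxc_def by auto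
  then show ?thesis using xs by blast
qed

end

definition inA :: "('v,'a) qpath \<times> nat \<Rightarrow> 'a option" where
  "inA h = (if snd h = 0 then None else Some (snd (fst h) ! (snd h - 1)))"
definition outA :: "('v,'a) qpath \<times> nat \<Rightarrow> 'a option" where
  "outA h = (if snd h < length (snd (fst h)) then Some (snd (fst h) ! snd h) else None)"

context gent begin

lemma HE_iff: "h \<in> HE \<longleftrightarrow> fst h \<in> MB \<and> snd h \<le> length (snd (fst h))"
  unfolding half_edges_def by simp

lemma MZ_iff: "(v, xs) \<in> MZ \<longleftrightarrow> xs = [] \<and> v \<in> V \<and> (indeg E t v + outdeg E s v = 1 \<or>
       (indeg E t v = 1 \<and> outdeg E s v = 1 \<and>
        (\<forall>\<alpha>\<in>E. \<forall>\<beta>\<in>E. t \<alpha> = v \<longrightarrow> s \<beta> = v \<longrightarrow> (\<alpha>,\<beta>) \<notin> R)))"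
  unfolding M0_def by auto

lemma MB_cases: "m \<in> MB \<Longrightarrow> (m \<in> MP \<and> snd m \<noteq> []) \<or> (snd m = [] \<and> m \<in> MZ)"
  unfolding Mbar_def using mp_char by (auto simp: M0_def)

lemma MB_nontriv: "m \<in> MB \<Longrightarrow> snd m \<noteq> [] \<Longrightarrow> n.maxc (snd m) \<and> set (snd m) \<subseteq> E \<and> fst m = s (hd (snd m))"
  using MB_cases mp_char by blast

lemma MB_triv: "m \<in> MB \<Longrightarrow> snd m = [] \<Longrightarrow> m \<in> MZ \<and> m \<notin> MP"
  using MB_cases mp_char by blast

lemma label_V: "h \<in> HE \<Longrightarrow> he_label t h \<in> V"
proof -
  assume h: "h \<in> HE"
  obtain m p where hp: "h = (m,p)" by (cases h)
  have m: "m \<in> MB" "p \<le> length (snd m)" using h hp HE_iff by auto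
  show ?thesis
  proof (cases "snd m = []")
    case True then show ?thesis using MB_triv[OF m(1)] hp m unfolding he_label_def
      by (cases m) (auto simp: M0_def)
  next
    case False
    then have X: "n.maxc (snd m)" "set (snd m) \<subseteq> E" "fst m = s (hd (snd m))" using MB_nontriv m by auto
    show ?thesis
    proof (cases "p = 0")
      case True
      have "hd (snd m) \<in> E" using X(2) hd_in_set[OF False] by auto
      then show ?thesis using X True sV hp unfolding he_label_def by auto
    next
      case F: False
      then have "snd m ! (p-1) \<in> set (snd m)" using m by auto
      then show ?thesis using X F tV hp unfolding he_label_def by auto
    qed
  qed
qed

lemma outA_Some: "h \<in> HE \<Longrightarrow> outA h = Some b \<Longrightarrow>
   n.maxc (snd (fst h)) \<and> set (snd (fst h)) \<subseteq> E \<and> fst (fst h) = s (hd (snd (fst h)))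
   \<and> snd h < length (snd (fst h)) \<and> snd (fst h) ! snd h = b \<and> b \<in> E"
proof -
  assume h: "h \<in> HE" and o: "outA h = Some b"
  have lt: "snd h < length (snd (fst h))" "snd (fst h) ! snd h = b" using o unfolding outA_def by (auto split: if_splits)
  then have ne: "snd (fst h) \<noteq> []" by auto
  have X: "n.maxc (snd (fst h)) \<and> set (snd (fst h)) \<subseteq> E \<and> fst (fst h) = s (hd (snd (fst h)))"
    using MB_nontriv[OF _ ne] h HE_iff by auto
  then show ?thesis using lt by (auto dest: nth_mem)
qed

lemma inA_Some: "h \<in> HE \<Longrightarrow> inA h = Some a \<Longrightarrow>
   n.maxc (snd (fst h)) \<and> set (snd (fst h)) \<subseteq> E \<and> fst (fst h) = s (hd (snd (fst h)))
   \<and> 0 < snd h \<and> snd h \<le> length (snd (fst h)) \<and> snd (fst h) ! (snd h - 1) = a \<and> a \<in> E"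
proof -
  assume h: "h \<in> HE" and o: "inA h = Some a"
  have lt: "0 < snd h" "snd (fst h) ! (snd h - 1) = a" using o unfolding inA_def by (auto split: if_splits)
  have le: "snd h \<le> length (snd (fst h))" using h HE_iff by auto
  then have ne: "snd (fst h) \<noteq> []" using lt by auto
  have X: "n.maxc (snd (fst h)) \<and> set (snd (fst h)) \<subseteq> E \<and> fst (fst h) = s (hd (snd (fst h)))"
    using MB_nontriv[OF _ ne] h HE_iff by auto
  have "snd (fst h) ! (snd h - 1) \<in> set (snd (fst h))" using lt le by auto
  then show ?thesis using lt le X by auto
qed

lemma out_ex: assumes a: "a \<in> E" shows "\<exists>h. h \<in> HE \<and> outA h = Some a"
proof -
  obtain xs i where X: "n.maxc xs" "set xs \<subseteq> E" "i < length xs" "xs!i = a" using exists_maxpath[OF a] by blast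
  have "(s (hd xs), xs) \<in> MP" using X mp_char unfolding n.maxc_def by auto
  then have "((s (hd xs), xs), i) \<in> HE \<and> outA ((s (hd xs), xs), i) = Some a"
    using X unfolding half_edges_def Mbar_def outA_def by auto
  then show ?thesis by blast
qed

lemma in_ex: assumes a: "a \<in> E" shows "\<exists>h. h \<in> HE \<and> inA h = Some a"
proof -
  obtain xs i where X: "n.maxc xs" "set xs \<subseteq> E" "i < length xs" "xs!i = a" using exists_maxpath[OF a] by blast
  have "(s (hd xs), xs) \<in> MP" using X mp_char unfolding n.maxc_def by auto
  then have "((s (hd xs), xs), Suc i) \<in> HE \<and> inA ((s (hd xs), xs), Suc i) = Some a"
    using X unfolding half_edges_def Mbar_def inA_def by auto
  then show ?thesis by blast
qed

lemma qpath_eq: "fst m = s (hd (snd m)) \<Longrightarrow> fst m' = s (hd (snd m')) \<Longrightarrow> snd m = snd m' \<Longrightarrow> m = m'"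
  by (cases m; cases m') auto

lemma out_uniq: "h \<in> HE \<Longrightarrow> h' \<in> HE \<Longrightarrow> outA h = Some a \<Longrightarrow> outA h' = Some a \<Longrightarrow> h = h'"
proof -
  assume A: "h \<in> HE" "h' \<in> HE" "outA h = Some a" "outA h' = Some a"
  have X: "n.maxc (snd (fst h)) \<and> set (snd (fst h)) \<subseteq> E \<and> fst (fst h) = s (hd (snd (fst h)))
   \<and> snd h < length (snd (fst h)) \<and> snd (fst h) ! snd h = a" using outA_Some A by blast
  have Y: "n.maxc (snd (fst h')) \<and> set (snd (fst h')) \<subseteq> E \<and> fst (fst h') = s (hd (snd (fst h')))
   \<and> snd h' < length (snd (fst h')) \<and> snd (fst h') ! snd h' = a" using outA_Some A by blast
  have "snd h = snd h' \<and> snd (fst h) = snd (fst h')" using n.max_uniq X Y by metis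
  moreover then have "fst h = fst h'" using qpath_eq X Y by metis
  ultimately show "h = h'" by (cases h; cases h') auto
qed

lemma in_uniq: "h \<in> HE \<Longrightarrow> h' \<in> HE \<Longrightarrow> inA h = Some a \<Longrightarrow> inA h' = Some a \<Longrightarrow> h = h'"
proof -
  assume A: "h \<in> HE" "h' \<in> HE" "inA h = Some a" "inA h' = Some a"
  have X: "n.maxc (snd (fst h)) \<and> set (snd (fst h)) \<subseteq> E \<and> fst (fst h) = s (hd (snd (fst h)))
   \<and> 0 < snd h \<and> snd h \<le> length (snd (fst h)) \<and> snd (fst h) ! (snd h - 1) = a" using inA_Some A by blast
  have Y: "n.maxc (snd (fst h')) \<and> set (snd (fst h')) \<subseteq> E \<and> fst (fst h') = s (hd (snd (fst h')))
   \<and> 0 < snd h' \<and> snd h' \<le> length (snd (fst h')) \<and> snd (fst h') ! (snd h' - 1) = a" using inA_Some A by blast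
  have "snd h - 1 < length (snd (fst h))" "snd h' - 1 < length (snd (fst h'))" using X Y by auto
  then have "snd h - 1 = snd h' - 1 \<and> snd (fst h) = snd (fst h')" using n.max_uniq X Y by metis
  moreover then have "fst h = fst h'" using qpath_eq X Y by metis
  moreover have "snd h = snd h'" using calculation X Y by auto
  ultimately show "h = h'" by (cases h; cases h') auto
qed

definition oh where "oh a = (THE h. h \<in> HE \<and> outA h = Some a)"
definition ih where "ih a = (THE h. h \<in> HE \<and> inA h = Some a)"

lemma oh: "a \<in> E \<Longrightarrow> oh a \<in> HE \<and> outA (oh a) = Some a"
  unfolding oh_def by (rule theI') (use out_ex out_uniq in blast)
lemma ih: "a \<in> E \<Longrightarrow> ih a \<in> HE \<and> inA (ih a) = Some a"
  unfolding ih_def by (rule theI') (use in_ex in_uniq in blast)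

lemma oh_eq: "h \<in> HE \<Longrightarrow> outA h = Some a \<Longrightarrow> h = oh a"
  using oh out_uniq outA_Some by blast
lemma ih_eq: "h \<in> HE \<Longrightarrow> inA h = Some a \<Longrightarrow> h = ih a"
  using ih in_uniq inA_Some by blast

lemma next_oh: "a \<in> E \<Longrightarrow> he_next (oh a) = ih a"
proof -
  assume a: "a \<in> E"
  let ?h = "oh a"
  have X: "snd ?h < length (snd (fst ?h))" "snd (fst ?h) ! snd ?h = a" "?h \<in> HE"
    using outA_Some oh[OF a] by blast+
  have n: "he_next ?h = (fst ?h, Suc (snd ?h))" using X unfolding he_next_def by auto
  have "he_next ?h \<in> HE" using n X HE_iff by auto
  moreover have "inA (he_next ?h) = Some a" using n X unfolding inA_def by auto
  ultimately show ?thesis using ih_eq by auto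
qed

lemma label_oh: "a \<in> E \<Longrightarrow> he_label t (oh a) = s a"
proof -
  assume a: "a \<in> E"
  let ?h = "oh a" let ?xs = "snd (fst ?h)" let ?p = "snd ?h"
  have X: "n.maxc ?xs" "set ?xs \<subseteq> E" "fst (fst ?h) = s (hd ?xs)" "?p < length ?xs" "?xs ! ?p = a"
    using outA_Some oh[OF a] by blast+
  show ?thesis
  proof (cases "?p = 0")
    case True then show ?thesis using X unfolding he_label_def by (auto simp: hd_conv_nth)
  next
    case False
    have "chn Qn ?xs" using X unfolding n.maxc_def by auto
    moreover have "Suc (?p - 1) < length ?xs" using X False by simp
    ultimately have "Qn (?xs ! (?p - 1)) (?xs ! Suc (?p - 1))" unfolding chn_def by blast
    moreover have "Suc (?p - 1) = ?p" using False by simp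
    ultimately have "Qn (?xs ! (?p - 1)) a" using X by simp
    then show ?thesis using X False unfolding he_label_def Qn_def by auto
  qed
qed

lemma label_ih: "a \<in> E \<Longrightarrow> he_label t (ih a) = t a"
proof -
  assume a: "a \<in> E"
  have "inA (ih a) = Some a" using ih[OF a] by blast
  then show ?thesis unfolding he_label_def inA_def by (auto split: if_splits)
qed

lemma inout: "h \<in> HE \<Longrightarrow> inA h = Some a \<Longrightarrow> outA h = Some b \<Longrightarrow> Qn a b"
proof -
  assume A: "h \<in> HE" "inA h = Some a" "outA h = Some b"
  let ?xs = "snd (fst h)" let ?p = "snd h"
  have X: "n.maxc ?xs" "0 < ?p" "?xs ! (?p - 1) = a" using inA_Some A by blast+
  have Y: "?p < length ?xs" "?xs ! ?p = b" using outA_Some A by blast+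
  have "chn Qn ?xs" using X unfolding n.maxc_def by auto
  moreover have "Suc (?p - 1) < length ?xs" using X Y by simp
  ultimately have "Qn (?xs ! (?p - 1)) (?xs ! Suc (?p - 1))" unfolding chn_def by blast
  moreover have "Suc (?p - 1) = ?p" using X by simp
  ultimately show ?thesis using X Y by simp
qed

lemma in_noout: "h \<in> HE \<Longrightarrow> inA h = Some a \<Longrightarrow> outA h = None \<Longrightarrow> \<not> Qn a b"
proof -
  assume A: "h \<in> HE" "inA h = Some a" "outA h = None"
  let ?xs = "snd (fst h)" let ?p = "snd h"
  have X: "n.maxc ?xs" "0 < ?p" "?xs ! (?p - 1) = a" "?p \<le> length ?xs" using inA_Some A by blast+
  have "?p = length ?xs" using A(3) X unfolding outA_def by (auto split: if_splits)
  then have "last ?xs = a" using X by (auto simp: last_conv_nth)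
  then show ?thesis using X unfolding n.maxc_def by auto
qed

lemma out_noin: "h \<in> HE \<Longrightarrow> outA h = Some b \<Longrightarrow> inA h = None \<Longrightarrow> \<not> Qn a b"
proof -
  assume A: "h \<in> HE" "outA h = Some b" "inA h = None"
  let ?xs = "snd (fst h)" let ?p = "snd h"
  have X: "n.maxc ?xs" "?p < length ?xs" "?xs ! ?p = b" using outA_Some A by blast+
  have "?p = 0" using A(3) unfolding inA_def by (auto split: if_splits)
  then have "hd ?xs = b" using X by (auto simp: hd_conv_nth)
  then show ?thesis using X unfolding n.maxc_def by auto
qed

lemma noinout: "h \<in> HE \<Longrightarrow> inA h = None \<Longrightarrow> outA h = None \<Longrightarrow>
   h = ((he_label t h, []), 0) \<and> (he_label t h, []) \<in> MZ"
proof -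
  assume A: "h \<in> HE" "inA h = None" "outA h = None"
  obtain v xs p where hp: "h = ((v,xs),p)" by (metis prod.collapse)
  have "p = 0" using A(2) hp unfolding inA_def by (auto split: if_splits)
  moreover then have "xs = []" using A(3) hp unfolding outA_def by (auto split: if_splits)
  moreover have "(v,xs) \<in> MB" using A(1) hp HE_iff by auto
  ultimately show ?thesis using MB_triv hp unfolding he_label_def by auto
qed

lemma Qn_join: "Qn a b \<Longrightarrow> ih a = oh b"
proof -
  assume q: "Qn a b"
  then have ab: "a \<in> E" "b \<in> E" unfolding Qn_def by auto
  have o: "oh b \<in> HE" "outA (oh b) = Some b" using oh ab by auto
  show ?thesis
  proof (cases "inA (oh b)")
    case None then show ?thesis using out_noin[OF o None] q by auto
  next
    case (Some c)
    then have "Qn c b" using inout o by auto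
    then have "c = a" using n.pu q by auto
    then show ?thesis using ih_eq o Some by auto
  qed
qed

lemma marked_iff: "h \<in> HE \<Longrightarrow> he_marked h \<longleftrightarrow> outA h = None"
  unfolding he_marked_def outA_def using HE_iff by auto

lemma next_HE: "h \<in> HE \<Longrightarrow> he_next h \<in> HE"
  unfolding he_next_def using HE_iff by auto

lemma next_inj: "inj he_next"
  unfolding inj_def he_next_def by (auto split: if_splits)

end

context gent begin

abbreviation "lab h \<equiv> he_label t h"
definition "Hv v = {h\<in>HE. lab h = v}"
definition "Inn v = {a\<in>E. t a = v}"
definition "Out v = {b\<in>E. s b = v}"
definition "Out0 v = {b\<in>E. s b = v \<and> (\<forall>a\<in>E. t a = v \<longrightarrow> (a,b) \<in> R)}"
definition "TT v = (if (v,[]) \<in> MZ then {((v,[]::'a list),0::nat)} else {})"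

lemma Hv_decomp: "Hv v = ih ` Inn v \<union> oh ` Out0 v \<union> TT v"
proof (intro equalityI subsetI)
  fix h assume "h \<in> Hv v"
  then have h: "h \<in> HE" "lab h = v" unfolding Hv_def by auto
  show "h \<in> ih ` Inn v \<union> oh ` Out0 v \<union> TT v"
  proof (cases "inA h")
    case (Some a)
    then have "a \<in> E" "h = ih a" using inA_Some ih_eq h by blast+
    then have "a \<in> Inn v" using label_ih h unfolding Inn_def by auto
    then show ?thesis using \<open>h = ih a\<close> by auto
  next
    case None
    show ?thesis
    proof (cases "outA h")
      case (Some b)
      then have b: "b \<in> E" "h = oh b" using outA_Some oh_eq h by blast+
      then have sb: "s b = v" using label_oh h by auto
      have "\<forall>a\<in>E. t a = v \<longrightarrow> (a,b) \<in> R"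
      proof (intro ballI impI)
        fix a assume "a \<in> E" "t a = v"
        then show "(a,b) \<in> R" using out_noin[OF h(1) Some None, of a] b sb unfolding Qn_def by auto
      qed
      then have "b \<in> Out0 v" using b sb unfolding Out0_def by auto
      then show ?thesis using b by auto
    next
      case N2: None
      then show ?thesis using noinout[OF h(1) None N2] h unfolding TT_def by auto
    qed
  qed
next
  fix h assume "h \<in> ih ` Inn v \<union> oh ` Out0 v \<union> TT v"
  then consider (a) a where "a \<in> Inn v" "h = ih a" | (b) b where "b \<in> Out0 v" "h = oh b" | (c) "h \<in> TT v" by auto
  then show "h \<in> Hv v"
  proof cases
    case a then show ?thesis using ih label_ih unfolding Hv_def Inn_def by auto
  next
    case b then show ?thesis using oh label_oh unfolding Hv_def Out0_def by auto
  next
    case c then show ?thesis unfolding Hv_def TT_def half_edges_def Mbar_def he_label_def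
      by (auto split: if_splits)
  qed
qed

lemma card_Hv: "card (Hv v) = card (Inn v) + card (Out0 v) + card (TT v)"
proof -
  have fI: "finite (Inn v)" "finite (Out0 v)" "finite (TT v)" using finE unfolding Inn_def Out0_def TT_def by auto
  have d1: "ih ` Inn v \<inter> oh ` Out0 v = {}"
  proof (intro equals0I)
    fix x assume "x \<in> ih ` Inn v \<inter> oh ` Out0 v"
    then have x1: "x \<in> ih ` Inn v" and x2: "x \<in> oh ` Out0 v" by auto
    from x1 obtain a where a: "x = ih a" "a \<in> Inn v" by (rule imageE)
    from x2 obtain b where b: "x = oh b" "b \<in> Out0 v" by (rule imageE)
    have ab: "a \<in> E" "b \<in> E" using a b unfolding Inn_def Out0_def by auto
    have "inA (oh b) = Some a" using ih[OF ab(1)] a b by simp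
    moreover have "outA (oh b) = Some b" "oh b \<in> HE" using oh[OF ab(2)] by auto
    ultimately have "Qn a b" using inout by blast
    then show False using a b unfolding Qn_def Out0_def Inn_def by auto
  qed
  have d2: "(ih ` Inn v \<union> oh ` Out0 v) \<inter> TT v = {}"
  proof -
    have "((v,[]),0) \<notin> ih ` Inn v \<union> oh ` Out0 v"
    proof
      assume "((v,[]),0) \<in> ih ` Inn v \<union> oh ` Out0 v"
      then consider a where "a \<in> Inn v" "((v,[]),0) = ih a" | b where "b \<in> Out0 v" "((v,[]),0) = oh b" by blast
      then show False
      proof cases
        case 1
        then have "inA ((v,[]),0) = Some a" using ih[of a] unfolding Inn_def by auto
        then show False by (simp add: inA_def)
      next
        case 2
        then have "outA ((v,[]),0) = Some b" using oh[of b] unfolding Out0_def by auto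
        then show False by (simp add: outA_def)
      qed
    qed
    then show ?thesis unfolding TT_def by auto
  qed
  have i1: "inj_on ih (Inn v)"
  proof (rule inj_onI)
    fix x y assume A: "x \<in> Inn v" "y \<in> Inn v" "ih x = ih y"
    then have "x \<in> E" "y \<in> E" unfolding Inn_def by auto
    then have 1: "inA (ih x) = Some x" and 2: "inA (ih y) = Some y" using ih by blast+
    have "Some x = inA (ih x)" using 1 by simp
    also have "\<dots> = inA (ih y)" using A(3) by (rule arg_cong)
    also have "\<dots> = Some y" using 2 by simp
    finally show "x = y" by simp
  qed
  have i2: "inj_on oh (Out0 v)"
  proof (rule inj_onI)
    fix x y assume A: "x \<in> Out0 v" "y \<in> Out0 v" "oh x = oh y"
    then have "x \<in> E" "y \<in> E" unfolding Out0_def by auto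
    then have 1: "outA (oh x) = Some x" and 2: "outA (oh y) = Some y" using oh by blast+
    have "Some x = outA (oh x)" using 1 by simp
    also have "\<dots> = outA (oh y)" using A(3) by (rule arg_cong)
    also have "\<dots> = Some y" using 2 by simp
    finally show "x = y" by simp
  qed
  have "card (Hv v) = card (ih ` Inn v \<union> oh ` Out0 v) + card (TT v)"
    unfolding Hv_decomp by (rule card_Un_disjoint) (use fI d2 in auto)
  also have "card (ih ` Inn v \<union> oh ` Out0 v) = card (ih ` Inn v) + card (oh ` Out0 v)"
    by (rule card_Un_disjoint) (use fI d1 in auto)
  finally show ?thesis using card_image[OF i1] card_image[OF i2] by simp
qed

lemma card_le2: "finite S \<Longrightarrow> card S \<le> 2 \<Longrightarrow> S = {} \<or> (\<exists>x. S = {x}) \<or> (\<exists>x y. x \<noteq> y \<and> S = {x,y})"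
proof -
  assume "finite S" "card S \<le> 2"
  then consider "card S = 0" | "card S = 1" | "card S = 2" by linarith
  then show ?thesis
  proof cases
    case 1 then show ?thesis using \<open>finite S\<close> by auto
  next
    case 2 then show ?thesis by (auto simp: card_1_singleton_iff)
  next
    case 3 then show ?thesis by (auto simp: card_2_iff)
  qed
qed

lemma card_Hv2: assumes v: "v \<in> V" shows "card (Hv v) = 2"
proof -
  have fI: "finite (Inn v)" "finite (Out v)" using finE unfolding Inn_def Out_def by auto
  have dI: "card (Inn v) \<le> 2" "card (Out v) \<le> 2" using deg[OF v] unfolding Inn_def Out_def by auto
  have MZv: "(v,[]) \<in> MZ \<longleftrightarrow> (card (Inn v) + card (Out v) = 1 \<or>
       (card (Inn v) = 1 \<and> card (Out v) = 1 \<and>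
        (\<forall>\<alpha>\<in>E. \<forall>\<beta>\<in>E. t \<alpha> = v \<longrightarrow> s \<beta> = v \<longrightarrow> (\<alpha>,\<beta>) \<notin> R)))"
    using v unfolding MZ_iff indeg_def outdeg_def Inn_def Out_def by auto
  have cT: "card (TT v) = (if (v,[]) \<in> MZ then 1 else 0)" unfolding TT_def by auto
  from card_le2[OF fI(1) dI(1)] consider "Inn v = {}" | a where "Inn v = {a}" | a1 a2 where "a1 \<noteq> a2" "Inn v = {a1,a2}"
    by blast
  then show ?thesis
  proof cases
    case 1
    then have O: "Out0 v = Out v" unfolding Out0_def Out_def Inn_def by auto
    have "Out v \<noteq> {}" using no_isolated[OF v] 1 unfolding Inn_def Out_def by auto
    then consider b where "Out v = {b}" | b1 b2 where "b1 \<noteq> b2" "Out v = {b1,b2}"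
      using card_le2[OF fI(2) dI(2)] by blast
    then show ?thesis
    proof cases
      case 1
      then show ?thesis using card_Hv[of v] O cT MZv \<open>Inn v = {}\<close> by (simp add: numeral_2_eq_2; linarith?)
    next
      case 2
      then show ?thesis using card_Hv[of v] O cT MZv \<open>Inn v = {}\<close> by (simp add: numeral_2_eq_2; linarith?)
    qed
  next
    case (2 a)
    then have a: "a \<in> E" "t a = v" unfolding Inn_def by auto
    have O: "Out0 v = {b\<in>Out v. (a,b) \<in> R}" using 2 unfolding Out0_def Out_def Inn_def by auto
    consider "Out v = {}" | b where "Out v = {b}" | b1 b2 where "b1 \<noteq> b2" "Out v = {b1,b2}"
      using card_le2[OF fI(2) dI(2)] by blast
    then show ?thesis
    proof cases
      case 1
      then show ?thesis using card_Hv[of v] O cT MZv 2 by (simp add: numeral_2_eq_2; linarith?)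
    next
      case (2 b)
      then have b: "b \<in> E" "s b = v" unfolding Out_def by auto
      show ?thesis
      proof (cases "(a,b) \<in> R")
        case True
        then have "\<not> (v,[]) \<in> MZ" using MZv a b 2 \<open>Inn v = {a}\<close> by auto
        moreover have "Out0 v = {b}" using O 2 True by auto
        ultimately show ?thesis using card_Hv[of v] cT \<open>Inn v = {a}\<close> by (simp add: numeral_2_eq_2)
      next
        case False
        have "\<forall>\<alpha>\<in>E. \<forall>\<beta>\<in>E. t \<alpha> = v \<longrightarrow> s \<beta> = v \<longrightarrow> (\<alpha>,\<beta>) \<notin> R"
        proof (intro ballI impI)
          fix x y assume "x \<in> E" "y \<in> E" "t x = v" "s y = v"
          then have "x \<in> Inn v" "y \<in> Out v" unfolding Inn_def Out_def by auto
          then have "x = a" "y = b" using 2 \<open>Inn v = {a}\<close> by auto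
          then show "(x,y) \<notin> R" using False by simp
        qed
        then have "(v,[]) \<in> MZ" using MZv 2 \<open>Inn v = {a}\<close> by auto
        moreover have "Out0 v = {}" using O 2 False by auto
        ultimately show ?thesis using card_Hv[of v] cT \<open>Inn v = {a}\<close> by (simp add: numeral_2_eq_2)
      qed
    next
      case (3 b1 b2)
      then have b: "b1 \<in> E" "s b1 = v" "b2 \<in> E" "s b2 = v" unfolding Out_def by auto
      have "\<not> ((a,b1) \<in> R \<and> (a,b2) \<in> R)" using r.su 3 unfolding Qr_def by blast
      moreover have "\<not> ((a,b1) \<notin> R \<and> (a,b2) \<notin> R)"
      proof
        assume H: "(a,b1) \<notin> R \<and> (a,b2) \<notin> R"
        have "Qn a b1" "Qn a b2" unfolding Qn_def using a b H by auto
        then show False using n.su 3(1) by blast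
      qed
      ultimately have "Out0 v = {b1} \<or> Out0 v = {b2}"
      proof (cases "(a,b1) \<in> R")
        case True
        then have "(a,b2) \<notin> R" using \<open>\<not> ((a,b1) \<in> R \<and> (a,b2) \<in> R)\<close> by blast
        then have "Out0 v = {b1}" using O 3 True by auto
        then show ?thesis by simp
      next
        case False
        then have "(a,b2) \<in> R" using \<open>\<not> ((a,b1) \<notin> R \<and> (a,b2) \<notin> R)\<close> by blast
        then have "Out0 v = {b2}" using O 3 False by auto
        then show ?thesis by simp
      qed
      then have "card (Out0 v) = 1" by auto
      moreover have "\<not> (v,[]) \<in> MZ" using MZv 3 \<open>Inn v = {a}\<close> by auto
      ultimately show ?thesis using card_Hv[of v] cT \<open>Inn v = {a}\<close> by (simp add: numeral_2_eq_2; linarith?)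
    qed
  next
    case (3 a1 a2)
    have "Out0 v = {}"
    proof (rule ccontr)
      assume "Out0 v \<noteq> {}"
      then obtain b where "b \<in> Out0 v" by auto
      then have "(a1,b) \<in> R" "(a2,b) \<in> R" using 3 unfolding Out0_def Inn_def by auto
      then show False using r.pu 3 unfolding Qr_def by blast
    qed
    moreover have "\<not> (v,[]) \<in> MZ" using MZv 3 by auto
    ultimately show ?thesis using card_Hv[of v] cT 3 by (simp add: numeral_2_eq_2; linarith?)
  qed
qed

abbreviation "pt \<equiv> he_partner V E s t R"

lemma pt_ex1: assumes h: "h \<in> HE"
  shows "\<exists>h'. h' \<in> HE \<and> h' \<noteq> h \<and> lab h' = lab h"
    and "h1 \<in> HE \<Longrightarrow> h1 \<noteq> h \<Longrightarrow> lab h1 = lab h \<Longrightarrow> h2 \<in> HE \<Longrightarrow> h2 \<noteq> h \<Longrightarrow> lab h2 = lab h \<Longrightarrow> h1 = h2"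
proof -
  have c: "card (Hv (lab h)) = 2" using card_Hv2 label_V h by auto
  have hin: "h \<in> Hv (lab h)" using h unfolding Hv_def by auto
  obtain x y where xy: "x \<noteq> y" "Hv (lab h) = {x,y}" using c unfolding card_2_iff by blast
  show "\<exists>h'. h' \<in> HE \<and> h' \<noteq> h \<and> lab h' = lab h"
    using xy hin unfolding Hv_def by blast
  show "h1 \<in> HE \<Longrightarrow> h1 \<noteq> h \<Longrightarrow> lab h1 = lab h \<Longrightarrow> h2 \<in> HE \<Longrightarrow> h2 \<noteq> h \<Longrightarrow> lab h2 = lab h \<Longrightarrow> h1 = h2"
  proof -
    assume "h1 \<in> HE" "h1 \<noteq> h" "lab h1 = lab h" "h2 \<in> HE" "h2 \<noteq> h" "lab h2 = lab h"
    then have "h1 \<in> Hv (lab h)" "h2 \<in> Hv (lab h)" unfolding Hv_def by auto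
    then show "h1 = h2" using xy hin \<open>h1 \<noteq> h\<close> \<open>h2 \<noteq> h\<close> by auto
  qed
qed

lemma pt: "h \<in> HE \<Longrightarrow> pt h \<in> HE \<and> pt h \<noteq> h \<and> lab (pt h) = lab h"
  unfolding he_partner_def by (rule someI_ex) (rule pt_ex1(1))

lemma pt_eq: "h \<in> HE \<Longrightarrow> h' \<in> HE \<Longrightarrow> h' \<noteq> h \<Longrightarrow> lab h' = lab h \<Longrightarrow> h' = pt h"
  using pt_ex1(2)[of h h' "pt h"] pt[of h] by blast

lemma pt_pt: "h \<in> HE \<Longrightarrow> pt (pt h) = h"
  using pt[of h] pt_eq[of "pt h" h] by auto

lemma pt_sym: "h \<in> HE \<Longrightarrow> h' \<in> HE \<Longrightarrow> pt h = h' \<Longrightarrow> pt h' = h"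
  using pt_pt by blast

end

context gent begin

abbreviation "fc \<equiv> face V E s t R"
abbreviation "Fn \<equiv> F_next V E s t R"
abbreviation "Mn \<equiv> M_next V E s t R"
abbreviation "AG \<equiv> AG_step V E s t R"
definition cm :: "('v,'a) qpath \<Rightarrow> ('v,'a) qpath \<times> nat" where "cm m = (m, length (snd m))"

lemma cm: "m \<in> MB \<Longrightarrow> cm m \<in> HE \<and> he_marked (cm m) \<and> lab (cm m) = ptgt t m \<and> outA (cm m) = None
   \<and> inA (cm m) = (if snd m = [] then None else Some (last (snd m)))"
  unfolding cm_def half_edges_def he_marked_def he_label_def ptgt_def outA_def inA_def
  by (auto simp: last_conv_nth)

lemma next_cm: "he_next (cm m) = (m, 0)"
  unfolding cm_def he_next_def by simp

lemma lab0: "lab (m, 0) = fst m"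
  unfolding he_label_def by simp

lemma HE0: "m \<in> MB \<Longrightarrow> (m,0) \<in> HE"
  unfolding half_edges_def by simp

lemma inA0: "inA (m, 0) = None" unfolding inA_def by simp

lemma no_Rsucc:
  assumes m: "m \<in> MB" and g: "inA (pt (cm m)) = Some g"
  shows "g \<in> E" "pt (cm m) = ih g" "t g = ptgt t m" "\<forall>b. \<not> Qr g b"
proof -
  have c: "cm m \<in> HE" "outA (cm m) = None" "lab (cm m) = ptgt t m" using cm[OF m] by auto
  have p: "pt (cm m) \<in> HE" "pt (cm m) \<noteq> cm m" "lab (pt (cm m)) = lab (cm m)" using pt c by auto
  show gE: "g \<in> E" using inA_Some p(1) g by blast
  show h1: "pt (cm m) = ih g" using ih_eq p(1) g by blast
  show tg: "t g = ptgt t m" using label_ih[OF gE] h1 p c by simp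
  show "\<forall>b. \<not> Qr g b"
  proof (intro allI notI)
    fix b assume q: "Qr g b"
    then have bE: "b \<in> E" and sb: "s b = t g" using Rsub unfolding Qr_def by auto
    have o: "oh b \<in> HE" "outA (oh b) = Some b" using oh[OF bE] by auto
    have "oh b \<noteq> cm m" using o c by auto
    moreover have "lab (oh b) = lab (cm m)" using label_oh[OF bE] sb tg c by simp
    ultimately have "oh b = pt (cm m)" using pt_eq o c by blast
    then have "outA (pt (cm m)) = Some b" using o by simp
    then have "Qn g b" using inout p(1) g by blast
    then show False using q unfolding Qn_def Qr_def by auto
  qed
qed

lemma Fnext_case1:
  assumes m: "m \<in> MB" and g: "inA (pt (cm m)) = Some g"
  shows "\<exists>xs. Fn m = (s (hd xs), xs) \<and> r.maxc xs \<and> set xs \<subseteq> E \<and> last xs = g"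
proof -
  have c: "cm m \<in> HE" "outA (cm m) = None" "lab (cm m) = ptgt t m"
    "inA (cm m) = (if snd m = [] then None else Some (last (snd m)))" using cm[OF m] by auto
  have p: "pt (cm m) \<in> HE" "pt (cm m) \<noteq> cm m" "lab (pt (cm m)) = lab (cm m)" using pt c by auto
  note G = no_Rsucc[OF m g]
  obtain xs where xs: "r.maxc xs" "set xs \<subseteq> E" "last xs = g" using exists_fpath G by blast
  have ne: "xs \<noteq> []" using xs unfolding r.maxc_def by auto
  define f0 where "f0 = (s (hd xs), xs)"
  have f0F: "f0 \<in> FP" using fp_char xs ne unfolding f0_def by auto
  have f0t: "ptgt t f0 = ptgt t m" using ne xs G unfolding f0_def ptgt_def by auto
  let ?P = "\<lambda>f. f \<in> FP \<and> ptgt t f = ptgt t m \<and> (snd m \<noteq> [] \<longrightarrow> last (snd f) \<noteq> last (snd m))"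
  have Pf0: "?P f0"
  proof -
    have "snd m \<noteq> [] \<longrightarrow> g \<noteq> last (snd m)"
    proof (intro impI notI)
      assume "snd m \<noteq> []" "g = last (snd m)"
      then have "inA (cm m) = Some g" using c by simp
      then have "cm m = ih g" using ih_eq c by blast
      then show False using p G by simp
    qed
    then show ?thesis using f0F f0t xs unfolding f0_def by auto
  qed
  have uq: "\<And>f. ?P f \<Longrightarrow> f = f0"
  proof -
    fix f assume Pf: "?P f"
    let ?ys = "snd f"
    have Y: "?ys \<noteq> []" "r.maxc ?ys" "set ?ys \<subseteq> E" "fst f = s (hd ?ys)" using Pf fp_char by blast+
    define g' where "g' = last ?ys"
    have g'E: "g' \<in> E" using Y unfolding g'_def by auto
    have tg': "t g' = ptgt t m" using Pf Y unfolding g'_def ptgt_def by auto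
    have i: "ih g' \<in> HE" "inA (ih g') = Some g'" using ih[OF g'E] by auto
    have "ih g' \<noteq> cm m"
    proof
      assume e: "ih g' = cm m"
      show False
      proof (cases "snd m = []")
        case True then show False using e i c by simp
      next
        case False
        then have "inA (cm m) = Some (last (snd m))" using c by simp
        then have "g' = last (snd m)" using e i by simp
        then show False using Pf False unfolding g'_def by simp
      qed
    qed
    moreover have "lab (ih g') = lab (cm m)" using label_ih[OF g'E] tg' c by simp
    ultimately have "ih g' = pt (cm m)" using pt_eq i c by blast
    then have "ih g' = ih g" using G by simp
    then have "inA (ih g) = Some g'" using i by simp
    moreover have "inA (ih g) = Some g" using ih[OF G(1)] by simp
    ultimately have gg: "g' = g" by simp
    have "length ?ys - 1 < length ?ys" "length xs - 1 < length xs" using Y ne by auto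
    moreover have "?ys ! (length ?ys - 1) = xs ! (length xs - 1)"
    proof -
      have "?ys ! (length ?ys - 1) = last ?ys" using Y(1) by (simp add: last_conv_nth)
      moreover have "xs ! (length xs - 1) = last xs" using ne by (simp add: last_conv_nth)
      ultimately show ?thesis using gg xs(3) unfolding g'_def by simp
    qed
    ultimately have "?ys = xs" using r.max_uniq Y xs by blast
    then show "f = f0" using Y unfolding f0_def by (cases f) auto
  qed
  have "Fn m = f0"
  proof -
    have ex: "\<exists>f. ?P f" using Pf0 by blast
    have "Fn m = (THE f. ?P f)" unfolding F_next_def Let_def using ex by simp
    also have "\<dots> = f0" using Pf0 uq by (rule the_equality)
    finally show ?thesis .
  qed
  then show ?thesis using xs unfolding f0_def by blast
qed

lemma Fnext_case2:
  assumes m: "m \<in> MB" and g: "inA (pt (cm m)) = None"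
  shows "Fn m = (ptgt t m, [])"
proof -
  have c: "cm m \<in> HE" "outA (cm m) = None" "lab (cm m) = ptgt t m"
    "inA (cm m) = (if snd m = [] then None else Some (last (snd m)))" using cm[OF m] by auto
  let ?P = "\<lambda>f. f \<in> FP \<and> ptgt t f = ptgt t m \<and> (snd m \<noteq> [] \<longrightarrow> last (snd f) \<noteq> last (snd m))"
  have "\<not> (\<exists>f. ?P f)"
  proof
    assume "\<exists>f. ?P f"
    then obtain f where Pf: "?P f" by blast
    let ?ys = "snd f"
    have Y: "?ys \<noteq> []" "r.maxc ?ys" "set ?ys \<subseteq> E" "fst f = s (hd ?ys)" using Pf fp_char by blast+
    define g' where "g' = last ?ys"
    have g'E: "g' \<in> E" using Y unfolding g'_def by auto
    have tg': "t g' = ptgt t m" using Pf Y unfolding g'_def ptgt_def by auto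
    have i: "ih g' \<in> HE" "inA (ih g') = Some g'" using ih[OF g'E] by auto
    have "ih g' \<noteq> cm m"
    proof
      assume e: "ih g' = cm m"
      show False
      proof (cases "snd m = []")
        case True then show False using e i c by simp
      next
        case False
        then have "inA (cm m) = Some (last (snd m))" using c by simp
        then have "g' = last (snd m)" using e i by simp
        then show False using Pf False unfolding g'_def by simp
      qed
    qed
    moreover have "lab (ih g') = lab (cm m)" using label_ih[OF g'E] tg' c by simp
    ultimately have "ih g' = pt (cm m)" using pt_eq i c by blast
    then show False using i g by simp
  qed
  then show ?thesis unfolding F_next_def Let_def by auto
qed

end

context gent begin

lemma Mnext_F:
  assumes xs: "r.maxc xs" "set xs \<subseteq> E"
  shows "Mn (s (hd xs), xs) \<in> MB \<and> fst (Mn (s (hd xs), xs)) = s (hd xs)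
       \<and> (Mn (s (hd xs), xs), 0) \<noteq> oh (hd xs)"
proof -
  have ne: "xs \<noteq> []" using xs unfolding r.maxc_def by auto
  define g1 where "g1 = hd xs"
  define u where "u = s g1"
  have g1E: "g1 \<in> E" using ne xs unfolding g1_def by auto
  have o: "oh g1 \<in> HE" "outA (oh g1) = Some g1" "lab (oh g1) = u" using oh[OF g1E] label_oh[OF g1E] u_def by auto
  define h2 where "h2 = pt (oh g1)"
  have p: "h2 \<in> HE" "h2 \<noteq> oh g1" "lab h2 = u" using pt o unfolding h2_def by auto
  have inN: "inA h2 = None"
  proof (cases "inA h2")
    case (Some a)
    have aE: "a \<in> E" using inA_Some p(1) Some by blast
    have ta: "t a = u" using label_ih[OF aE] ih_eq[OF p(1) Some] p(3) by simp
    show ?thesis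
    proof (cases "(a, g1) \<in> R")
      case True
      then have "Qr a (hd xs)" unfolding Qr_def g1_def by simp
      then show ?thesis using xs unfolding r.maxc_def by blast
    next
      case False
      then have "Qn a g1" using aE g1E ta unfolding Qn_def u_def by auto
      then have "ih a = oh g1" by (rule Qn_join)
      moreover have "h2 = ih a" using ih_eq[OF p(1) Some] .
      ultimately show ?thesis using p(2) by simp
    qed
  qed
  let ?P = "\<lambda>m. m \<in> MP \<and> fst m = u \<and> (xs \<noteq> [] \<longrightarrow> snd m \<noteq> [] \<and> hd (snd m) \<noteq> hd xs)"
  have key: "\<And>m. ?P m \<Longrightarrow> (m, 0) = h2"
  proof -
    fix m assume Pm: "?P m"
    have mM: "m \<in> MB" using Pm unfolding Mbar_def by auto
    have m0: "(m,0) \<in> HE" using HE0[OF mM] .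
    have sm: "snd m \<noteq> []" "hd (snd m) \<noteq> g1" using Pm ne unfolding g1_def by auto
    have "outA (m,0) = Some (hd (snd m))" using sm unfolding outA_def by (simp add: hd_conv_nth)
    then have "(m,0) \<noteq> oh g1" using o sm by auto
    moreover have "lab (m,0) = u" using lab0 Pm by simp
    ultimately show "(m,0) = h2" using pt_eq[OF o(1) m0] o(3) unfolding h2_def by simp
  qed
  show ?thesis
  proof (cases "outA h2")
    case (Some b)
    have X: "n.maxc (snd (fst h2))" "set (snd (fst h2)) \<subseteq> E" "fst (fst h2) = s (hd (snd (fst h2)))"
      "snd h2 < length (snd (fst h2))" "snd (fst h2) ! snd h2 = b" using outA_Some[OF p(1) Some] by blast+
    have s0: "snd h2 = 0" using inN unfolding inA_def by (auto split: if_splits)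
    define m2 where "m2 = fst h2"
    have h2e: "h2 = (m2, 0)" using s0 unfolding m2_def by (cases h2) auto
    have m2P: "m2 \<in> MP" using mp_char X s0 unfolding m2_def by auto
    have fm2: "fst m2 = u" using p(3) h2e lab0 by metis
    have hd2: "hd (snd m2) = b" using X s0 unfolding m2_def by (auto simp: hd_conv_nth)
    have "b \<noteq> g1"
    proof
      assume "b = g1"
      then have "h2 = oh g1" using oh_eq[OF p(1)] Some by simp
      then show False using p(2) by simp
    qed
    then have P2: "?P m2" using m2P fm2 hd2 X s0 ne unfolding m2_def g1_def by auto
    have "Mn (u, xs) = m2"
    proof -
      have ex: "\<exists>m. ?P m" using P2 by blast
      have "Mn (u, xs) = (THE m. ?P m)" unfolding M_next_def Let_def fst_conv snd_conv by (rule if_P[OF ex])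
      also have "\<dots> = m2"
      proof (rule the_equality)
        show "?P m2" by (rule P2)
        fix m assume "?P m"
        then have "(m,0) = h2" by (rule key)
        then show "m = m2" using h2e by simp
      qed
      finally show ?thesis .
    qed
    then show ?thesis using m2P fm2 h2e p(2) unfolding u_def g1_def Mbar_def by auto
  next
    case None
    have nio: "h2 = ((lab h2, []), 0) \<and> (lab h2, []) \<in> MZ" using noinout[OF p(1) inN None] .
    have nP: "\<not> (\<exists>m. ?P m)"
    proof
      assume "\<exists>m. ?P m"
      then obtain m where Pm: "?P m" by blast
      then have "(m,0) = h2" by (rule key)
      then have mf: "m = fst h2" by (metis fst_conv)
      have "snd (fst h2) = []" using nio by (metis fst_conv snd_conv)
      then have "snd m = []" using mf by simp
      then show False using Pm ne by auto
    qed
    then have "Mn (u, xs) = (u, [])" unfolding M_next_def Let_def fst_conv snd_conv by (rule if_not_P)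
    then show ?thesis using nio p unfolding u_def g1_def Mbar_def by auto
  qed
qed

lemma Mnext_triv:
  assumes m: "m \<in> MB" and g: "inA (pt (cm m)) = None"
  shows "Mn (ptgt t m, []) \<in> MB \<and> (Mn (ptgt t m, []), 0) = pt (cm m)"
proof -
  have c: "cm m \<in> HE" "outA (cm m) = None" "lab (cm m) = ptgt t m" using cm[OF m] by auto
  define h1 where "h1 = pt (cm m)"
  define v where "v = ptgt t m"
  have p: "h1 \<in> HE" "h1 \<noteq> cm m" "lab h1 = v" using pt c unfolding h1_def v_def by auto
  have inN: "inA h1 = None" using g unfolding h1_def .
  let ?P = "\<lambda>m'. m' \<in> MP \<and> fst m' = v \<and> (([]::'a list) \<noteq> [] \<longrightarrow> snd m' \<noteq> [] \<and> hd (snd m') \<noteq> hd ([]::'a list))"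
  have key: "\<And>m'. ?P m' \<Longrightarrow> (m', 0) = h1"
  proof -
    fix m' assume Pm: "?P m'"
    have mM: "m' \<in> MB" using Pm unfolding Mbar_def by auto
    have m0: "(m',0) \<in> HE" using HE0[OF mM] .
    have "(m',0) \<noteq> cm m"
    proof
      assume e: "(m',0) = cm m"
      then have "m' = m" "length (snd m) = 0" unfolding cm_def by auto
      then have "m' = (fst m', [])" by (cases m') auto
      then show False using Pm mp_triv by metis
    qed
    moreover have "lab (m',0) = lab (cm m)" using lab0 Pm c unfolding v_def by simp
    ultimately show "(m',0) = h1" using pt_eq[OF c(1) m0] unfolding h1_def by simp
  qed
  show ?thesis
  proof (cases "outA h1")
    case (Some b)
    have X: "n.maxc (snd (fst h1))" "set (snd (fst h1)) \<subseteq> E" "fst (fst h1) = s (hd (snd (fst h1)))"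
      "snd h1 < length (snd (fst h1))" using outA_Some[OF p(1) Some] by blast+
    have s0: "snd h1 = 0" using inN unfolding inA_def by (auto split: if_splits)
    define m2 where "m2 = fst h1"
    have h1e: "h1 = (m2, 0)" using s0 unfolding m2_def by (cases h1) auto
    have m2P: "m2 \<in> MP" using mp_char X s0 unfolding m2_def by auto
    have fm2: "fst m2 = v" using p(3) h1e lab0 by metis
    have P2: "?P m2" using m2P fm2 by auto
    have "Mn (v, []) = m2"
    proof -
      have ex: "\<exists>m. ?P m" using P2 by blast
      have "Mn (v, []) = (THE m. ?P m)" unfolding M_next_def Let_def fst_conv snd_conv by (rule if_P[OF ex])
      also have "\<dots> = m2"
      proof (rule the_equality)
        show "?P m2" by (rule P2)
        fix m' assume "?P m'"
        then have "(m',0) = h1" by (rule key)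
        then show "m' = m2" using h1e by simp
      qed
      finally show ?thesis .
    qed
    then show ?thesis using m2P h1e unfolding v_def h1_def Mbar_def by auto
  next
    case None
    have nio: "h1 = ((lab h1, []), 0) \<and> (lab h1, []) \<in> MZ" using noinout[OF p(1) inN None] .
    have nP: "\<not> (\<exists>m'. ?P m')"
    proof
      assume "\<exists>m'. ?P m'"
      then obtain m' where Pm: "?P m'" by blast
      then have "(m',0) = h1" by (rule key)
      then have "m' = (v, [])" using nio p(3) by auto
      then show False using Pm mp_triv by auto
    qed
    then have "Mn (v, []) = (v, [])" unfolding M_next_def Let_def fst_conv snd_conv by (rule if_not_P)
    then show ?thesis using nio p unfolding v_def h1_def Mbar_def by auto
  qed
qed

end

context gent begin

lemma fc_def': "fc h = pt (he_next h)" unfolding face_def by simp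

lemma fc_oh: "a \<in> E \<Longrightarrow> fc (oh a) = pt (ih a)"
  unfolding fc_def' using next_oh by simp

lemma R_step: assumes q: "(a,b) \<in> R" shows "pt (ih a) = oh b"
proof -
  have ab: "a \<in> E" "b \<in> E" "t a = s b" using Rsub[OF q] by auto
  have i: "ih a \<in> HE" "inA (ih a) = Some a" using ih ab by auto
  have o: "oh b \<in> HE" "outA (oh b) = Some b" using oh ab by auto
  have ne: "oh b \<noteq> ih a"
  proof
    assume e: "oh b = ih a"
    then have "inA (oh b) = Some a" using i by simp
    then have "Qn a b" using inout o by blast
    then show False using q unfolding Qn_def by auto
  qed
  have l: "lab (oh b) = lab (ih a)" using label_oh label_ih ab by simp
  show ?thesis by (rule pt_eq[OF i(1) o(1) ne l, symmetric])
qed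

lemma AGface:
  assumes m: "m \<in> MB"
  shows "AG m \<in> MB \<and> (\<forall>j. 0 < j \<and> j \<le> length (snd (Fn m)) \<longrightarrow> \<not> he_marked ((fc ^^ j) (cm (AG m))))
        \<and> (fc ^^ Suc (length (snd (Fn m)))) (cm (AG m)) = cm m"
proof (cases "inA (pt (cm m))")
  case None
  have F: "Fn m = (ptgt t m, [])" using Fnext_case2[OF m None] .
  have A: "AG m = Mn (ptgt t m, [])" unfolding AG_step_def F by simp
  have M: "AG m \<in> MB" "(AG m, 0) = pt (cm m)" using Mnext_triv[OF m None] A by auto
  have "(fc ^^ Suc 0) (cm (AG m)) = fc (cm (AG m))" by simp
  also have "\<dots> = pt (AG m, 0)" unfolding fc_def' next_cm ..
  also have "\<dots> = pt (pt (cm m))" using M(2) by simp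
  also have "\<dots> = cm m" using pt_pt cm[OF m] by blast
  finally show ?thesis using M F by simp
next
  case (Some g)
  note G = no_Rsucc[OF m Some]
  obtain xs where xs: "Fn m = (s (hd xs), xs)" "r.maxc xs" "set xs \<subseteq> E" "last xs = g"
    using Fnext_case1[OF m Some] by blast
  have ne: "xs \<noteq> []" using xs unfolding r.maxc_def by auto
  have cx: "chn Qr xs" using xs unfolding r.maxc_def by auto
  have A: "AG m = Mn (s (hd xs), xs)" unfolding AG_step_def xs by simp
  have M: "AG m \<in> MB" "fst (AG m) = s (hd xs)" "(AG m, 0) \<noteq> oh (hd xs)" using Mnext_F[OF xs(2,3)] A by auto
  have hdE: "hd xs \<in> E" using ne xs by auto
  have first: "fc (cm (AG m)) = oh (hd xs)"
  proof -
    have o: "oh (hd xs) \<in> HE" using oh[OF hdE] by blast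
    have l: "lab (oh (hd xs)) = lab (AG m, 0)" using label_oh[OF hdE] lab0 M(2) by simp
    have "oh (hd xs) = pt (AG m, 0)" by (rule pt_eq[OF HE0[OF M(1)] o M(3)[symmetric] l])
    then show ?thesis unfolding fc_def' next_cm by simp
  qed
  have chain: "\<And>j. j < length xs \<Longrightarrow> (fc ^^ Suc j) (cm (AG m)) = oh (xs ! j)"
  proof -
    fix j show "j < length xs \<Longrightarrow> (fc ^^ Suc j) (cm (AG m)) = oh (xs ! j)"
    proof (induction j)
      case 0 then show ?case using first ne by (simp add: hd_conv_nth)
    next
      case (Suc j)
      then have IH: "(fc ^^ Suc j) (cm (AG m)) = oh (xs ! j)" by simp
      have q: "(xs ! j, xs ! Suc j) \<in> R" using cx Suc.prems unfolding chn_def Qr_def by auto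
      have jE: "xs ! j \<in> E" using Rsub[OF q] by simp
      have "(fc ^^ Suc (Suc j)) (cm (AG m)) = fc (oh (xs ! j))" using IH by simp
      also have "\<dots> = pt (ih (xs ! j))" using fc_oh[OF jE] .
      also have "\<dots> = oh (xs ! Suc j)" using R_step[OF q] .
      finally show ?case .
    qed
  qed
  have unm: "\<forall>j. 0 < j \<and> j \<le> length (snd (Fn m)) \<longrightarrow> \<not> he_marked ((fc ^^ j) (cm (AG m)))"
  proof (intro allI impI)
    fix j assume j: "0 < j \<and> j \<le> length (snd (Fn m))"
    then have j': "j - 1 < length xs" "Suc (j - 1) = j" using xs by auto
    have e: "(fc ^^ j) (cm (AG m)) = oh (xs ! (j-1))" using chain[OF j'(1)] j'(2) by simp
    have "xs ! (j-1) \<in> E" using j'(1) xs(3) by (auto dest: nth_mem)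
    then have "oh (xs ! (j-1)) \<in> HE" "outA (oh (xs ! (j-1))) \<noteq> None" using oh by auto
    then show "\<not> he_marked ((fc ^^ j) (cm (AG m)))" using e marked_iff by simp
  qed
  have "(fc ^^ Suc (length xs)) (cm (AG m)) = fc ((fc ^^ Suc (length xs - 1)) (cm (AG m)))"
    using ne by simp
  also have "\<dots> = fc (oh (xs ! (length xs - 1)))"
  proof -
    have ch: "(fc ^^ Suc (length xs - 1)) (cm (AG m)) = oh (xs ! (length xs - 1))"
      by (rule chain) (use ne in simp)
    show ?thesis by (simp only: ch)
  qed
  also have "\<dots> = fc (oh g)" using xs(4) ne by (simp add: last_conv_nth)
  also have "\<dots> = pt (ih g)" using fc_oh G by simp
  also have "\<dots> = pt (pt (cm m))" using G by simp
  also have "\<dots> = cm m" using pt_pt cm[OF m] by blast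
  finally show ?thesis using M unm xs by simp
qed

end

definition orb :: "('a \<Rightarrow> 'a) \<Rightarrow> 'a \<Rightarrow> 'a set" where "orb f x = range (\<lambda>n. (f ^^ n) x)"
definition per :: "('a \<Rightarrow> 'a) \<Rightarrow> 'a \<Rightarrow> nat" where "per f x = (LEAST n. 0 < n \<and> (f ^^ n) x = x)"

lemma funpow_add_app: "(f ^^ (a + b)) x = (f ^^ a) ((f ^^ b) x)"
  by (simp add: funpow_add)

locale permA =
  fixes f :: "'a \<Rightarrow> 'a" and A :: "'a set"
  assumes fin: "finite A" and maps: "\<And>x. x \<in> A \<Longrightarrow> f x \<in> A" and inj: "inj_on f A"
begin

lemma iter_in: "x \<in> A \<Longrightarrow> (f ^^ n) x \<in> A"
  by (induction n) (auto intro: maps)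

lemma iter_inj: "x \<in> A \<Longrightarrow> y \<in> A \<Longrightarrow> (f ^^ n) x = (f ^^ n) y \<Longrightarrow> x = y"
proof (induction n)
  case 0 then show ?case by simp
next
  case (Suc n)
  have "f ((f ^^ n) x) = f ((f ^^ n) y)" using Suc.prems by simp
  then have "(f ^^ n) x = (f ^^ n) y" using inj iter_in Suc.prems unfolding inj_on_def by blast
  then show ?case using Suc by blast
qed

lemma ex_period: assumes x: "x \<in> A" shows "\<exists>n. 0 < n \<and> (f ^^ n) x = x"
proof -
  let ?g = "\<lambda>n. (f ^^ n) x"
  have "\<not> inj_on ?g {..card A}"
  proof
    assume "inj_on ?g {..card A}"
    moreover have "?g ` {..card A} \<subseteq> A" using iter_in x by auto
    ultimately have "card {..card A} \<le> card A" using card_inj_on_le fin by blast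
    then show False by simp
  qed
  then obtain i j where ij: "i \<in> {..card A}" "j \<in> {..card A}" "i \<noteq> j" "?g i = ?g j"
    unfolding inj_on_def by blast
  have "\<exists>a b. a < b \<and> ?g a = ?g b"
  proof (cases "i < j")
    case True then show ?thesis using ij by blast
  next
    case False then have "j < i" using ij by simp
    then show ?thesis using ij by metis
  qed
  then obtain a b where ab: "a < b" "?g a = ?g b" by blast
  have "(f ^^ a) ((f ^^ (b - a)) x) = (f ^^ a) x"
    using ab funpow_add_app[of a "b - a" f x] by simp
  then have "(f ^^ (b - a)) x = x" using iter_inj iter_in x by blast
  then show ?thesis using ab by (intro exI[of _ "b - a"]) auto
qed

lemma per: "x \<in> A \<Longrightarrow> 0 < per f x \<and> (f ^^ per f x) x = x"
  unfolding per_def by (rule LeastI_ex) (rule ex_period)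

lemma per_min: "0 < n \<Longrightarrow> n < per f x \<Longrightarrow> (f ^^ n) x \<noteq> x"
  unfolding per_def using not_less_Least by blast

lemma iter_mult: "x \<in> A \<Longrightarrow> (f ^^ (per f x * q)) x = x"
proof (induction q)
  case 0 then show ?case by simp
next
  case (Suc q)
  have "per f x * Suc q = per f x * q + per f x" by simp
  then have "(f ^^ (per f x * Suc q)) x = (f ^^ (per f x * q)) ((f ^^ per f x) x)"
    using funpow_add_app[of "per f x * q" "per f x" f x] by (simp add: add.commute)
  then show ?case using per Suc by simp
qed

lemma iter_mod: "x \<in> A \<Longrightarrow> (f ^^ n) x = (f ^^ (n mod per f x)) x"
proof -
  assume x: "x \<in> A"
  have e: "n mod per f x + per f x * (n div per f x) = n" by simp
  have "(f ^^ n) x = (f ^^ (n mod per f x + per f x * (n div per f x))) x" by (simp only: e)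
  also have "\<dots> = (f ^^ (n mod per f x)) ((f ^^ (per f x * (n div per f x))) x)"
    by (rule funpow_add_app)
  finally have "(f ^^ n) x = (f ^^ (n mod per f x)) ((f ^^ (per f x * (n div per f x))) x)" .
  then show ?thesis using iter_mult x by simp
qed

lemma orb_img: "x \<in> A \<Longrightarrow> orb f x = (\<lambda>n. (f ^^ n) x) ` {..<per f x}"
proof
  assume x: "x \<in> A"
  show "orb f x \<subseteq> (\<lambda>n. (f ^^ n) x) ` {..<per f x}"
  proof
    fix y assume "y \<in> orb f x"
    then obtain n where "y = (f ^^ n) x" unfolding orb_def by auto
    then have "y = (f ^^ (n mod per f x)) x" using iter_mod[OF x, of n] by simp
    moreover have "n mod per f x < per f x" using per x by simp
    ultimately show "y \<in> (\<lambda>n. (f ^^ n) x) ` {..<per f x}" by auto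
  qed
  show "(\<lambda>n. (f ^^ n) x) ` {..<per f x} \<subseteq> orb f x" unfolding orb_def by auto
qed

lemma inj_per: "x \<in> A \<Longrightarrow> inj_on (\<lambda>n. (f ^^ n) x) {..<per f x}"
proof (rule inj_onI)
  fix a b assume x: "x \<in> A" and ab: "a \<in> {..<per f x}" "b \<in> {..<per f x}" "(f ^^ a) x = (f ^^ b) x"
  show "a = b"
  proof (rule ccontr)
    assume "a \<noteq> b"
    then consider "a < b" | "b < a" by linarith
    then show False
    proof cases
      case 1
      have "(f ^^ a) ((f ^^ (b - a)) x) = (f ^^ a) x"
        using ab 1 funpow_add_app[of a "b - a" f x] by simp
      then have "(f ^^ (b - a)) x = x" using iter_inj iter_in x by blast
      moreover have "b - a < per f x" "0 < b - a" using 1 ab by auto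
      ultimately show False using per_min[of "b - a" x] by blast
    next
      case 2
      have "(f ^^ b) ((f ^^ (a - b)) x) = (f ^^ b) x"
        using ab 2 funpow_add_app[of b "a - b" f x] by simp
      then have "(f ^^ (a - b)) x = x" using iter_inj iter_in x by blast
      moreover have "a - b < per f x" "0 < a - b" using 2 ab by auto
      ultimately show False using per_min[of "a - b" x] by blast
    qed
  qed
qed

lemma card_orb: "x \<in> A \<Longrightarrow> card (orb f x) = per f x"
proof -
  assume x: "x \<in> A"
  have "card (orb f x) = card ((\<lambda>n. (f ^^ n) x) ` {..<per f x})" using orb_img[OF x] by simp
  also have "\<dots> = card {..<per f x}" by (rule card_image[OF inj_per[OF x]])
  finally show ?thesis by simp
qed

lemma orb_sub: "x \<in> A \<Longrightarrow> orb f x \<subseteq> A"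
  unfolding orb_def using iter_in by auto

lemma finite_orb: "x \<in> A \<Longrightarrow> finite (orb f x)"
  using orb_sub fin finite_subset by blast

lemma orb_self: "x \<in> orb f x"
proof -
  have "x = (\<lambda>n. (f ^^ n) x) 0" by simp
  then show ?thesis unfolding orb_def by (rule range_eqI)
qed

lemma in_orbI: "(f ^^ n) x \<in> orb f x"
  unfolding orb_def by auto

lemma orb_mem_eq: assumes x: "x \<in> A" and y: "y \<in> orb f x" shows "orb f y = orb f x"
proof -
  obtain n where yn: "y = (f ^^ n) x" using y unfolding orb_def by auto
  have "orb f y \<subseteq> orb f x"
  proof
    fix z assume "z \<in> orb f y"
    then obtain k where "z = (f ^^ k) y" unfolding orb_def by auto
    then have "z = (f ^^ (k + n)) x" using yn funpow_add_app[of k n f x] by simp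
    then show "z \<in> orb f x" unfolding orb_def by auto
  qed
  moreover have "x \<in> orb f y"
  proof -
    have le: "n \<le> per f x * n" using per[OF x] by simp
    have "(f ^^ (per f x * n - n)) y = (f ^^ (per f x * n - n + n)) x" using yn funpow_add_app[of "per f x * n - n" n f x] by simp
    also have "\<dots> = x" using le iter_mult[OF x] by simp
    finally have "x = (\<lambda>k. (f ^^ k) y) (per f x * n - n)" by simp
    then show ?thesis unfolding orb_def by (rule range_eqI)
  qed
  moreover have "orb f x \<subseteq> orb f y"
  proof
    fix z assume "z \<in> orb f x"
    then obtain k where "z = (f ^^ k) x" unfolding orb_def by auto
    moreover obtain j where "x = (f ^^ j) y" using \<open>x \<in> orb f y\<close> unfolding orb_def by auto
    ultimately have "z = (f ^^ (k + j)) y" using funpow_add_app[of k j f y] by simp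
    then show "z \<in> orb f y" unfolding orb_def by auto
  qed
  ultimately show ?thesis by blast
qed

definition ret :: "('a \<Rightarrow> bool) \<Rightarrow> 'a \<Rightarrow> nat" where
  "ret P y = (LEAST n. 0 < n \<and> P ((f ^^ n) y))"

lemma seg_aux:
  assumes c: "c \<in> A" and Pc: "P c"
  shows "a < per f c \<Longrightarrow> P ((f ^^ a) c) \<Longrightarrow>
    (\<Sum>n\<in>{n\<in>{a..<per f c}. P ((f ^^ n) c)}. ret P ((f ^^ n) c)) = per f c - a"
proof (induction "per f c - a" arbitrary: a rule: less_induct)
  case less
  let ?p = "per f c"
  let ?r = "ret P ((f ^^ a) c)"
  have ex: "0 < ?p - a \<and> P ((f ^^ (?p - a)) ((f ^^ a) c))"
  proof -
    have "(f ^^ (?p - a)) ((f ^^ a) c) = (f ^^ ?p) c" using less.prems funpow_add_app[of "?p - a" a f c] by simp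
    then show ?thesis using per[OF c] Pc less.prems by simp
  qed
  have r: "0 < ?r \<and> P ((f ^^ ?r) ((f ^^ a) c))" unfolding ret_def by (rule LeastI[of _ "?p - a"]) (rule ex)
  have rle: "?r \<le> ?p - a" unfolding ret_def by (rule Least_le) (rule ex)
  have rmin: "\<And>k. 0 < k \<Longrightarrow> k < ?r \<Longrightarrow> \<not> P ((f ^^ k) ((f ^^ a) c))"
    unfolding ret_def using not_less_Least by blast
  have Pr: "P ((f ^^ (a + ?r)) c)" using r funpow_add_app[of ?r a f c] by (simp add: add.commute)
  have split: "{n\<in>{a..<?p}. P ((f ^^ n) c)} = insert a {n\<in>{a + ?r..<?p}. P ((f ^^ n) c)}"
  proof (intro equalityI subsetI)
    fix n assume n: "n \<in> {n\<in>{a..<?p}. P ((f ^^ n) c)}"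
    show "n \<in> insert a {n\<in>{a + ?r..<?p}. P ((f ^^ n) c)}"
    proof (cases "n = a")
      case False
      have "\<not> (n < a + ?r)"
      proof
        assume "n < a + ?r"
        moreover have "(f ^^ (n - a)) ((f ^^ a) c) = (f ^^ n) c"
          using n funpow_add_app[of "n - a" a f c] by simp
        moreover have "n - a < ?r" "0 < n - a" using \<open>n < a + ?r\<close> n False by auto
        ultimately show False using rmin[of "n - a"] n by auto
      qed
      then show ?thesis using n by auto
    qed simp
  next
    fix n assume "n \<in> insert a {n\<in>{a + ?r..<?p}. P ((f ^^ n) c)}"
    then show "n \<in> {n\<in>{a..<?p}. P ((f ^^ n) c)}" using less.prems by auto
  qed
  have anot: "a \<notin> {n\<in>{a + ?r..<?p}. P ((f ^^ n) c)}" using r by auto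
  have "(\<Sum>n\<in>{n\<in>{a..<?p}. P ((f ^^ n) c)}. ret P ((f ^^ n) c))
      = ?r + (\<Sum>n\<in>{n\<in>{a + ?r..<?p}. P ((f ^^ n) c)}. ret P ((f ^^ n) c))"
    unfolding split by (subst sum.insert) (use anot in auto)
  also have "\<dots> = ?p - a"
  proof (cases "a + ?r < ?p")
    case True
    have "(\<Sum>n\<in>{n\<in>{a + ?r..<?p}. P ((f ^^ n) c)}. ret P ((f ^^ n) c)) = ?p - (a + ?r)"
      by (rule less.hyps) (use True r Pr in auto)
    then show ?thesis using True by simp
  next
    case False
    then have "{n\<in>{a + ?r..<?p}. P ((f ^^ n) c)} = {}" by auto
    then show ?thesis using False rle by simp
  qed
  finally show ?case .
qed

lemma seg_sum:
  assumes c: "c \<in> A" and Pc: "P c"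
  shows "(\<Sum>y\<in>{y\<in>orb f c. P y}. ret P y) = card (orb f c)"
proof -
  let ?g = "\<lambda>n. (f ^^ n) c"
  have "{y\<in>orb f c. P y} = ?g ` {n\<in>{0..<per f c}. P (?g n)}"
    using orb_img[OF c] by auto
  moreover have "inj_on ?g {n\<in>{0..<per f c}. P (?g n)}"
    using inj_per[OF c] by (rule inj_on_subset) auto
  ultimately have "(\<Sum>y\<in>{y\<in>orb f c. P y}. ret P y) = (\<Sum>n\<in>{n\<in>{0..<per f c}. P (?g n)}. ret P (?g n))"
    by (simp add: sum.reindex)
  also have "\<dots> = per f c - 0" by (rule seg_aux[of c P 0, OF c Pc]) (use per[OF c] Pc in auto)
  finally show ?thesis using card_orb[OF c] by simp
qed

end

context gent begin

lemma finite_MP: "finite MP"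
proof -
  let ?L = "{xs. set xs \<subseteq> E \<and> length xs \<le> card E}"
  have fL: "finite ?L" using finite_lists_length_le[OF finE] by simp
  have "MP \<subseteq> V \<times> ?L"
  proof
    fix m assume m: "m \<in> MP"
    then have X: "snd m \<noteq> []" "n.maxc (snd m)" "set (snd m) \<subseteq> E" "fst m = s (hd (snd m))" using mp_char by blast+
    have "distinct (snd m)" using X n.distinct_nosucc unfolding n.maxc_def by blast
    then have "length (snd m) = card (set (snd m))" by (simp add: distinct_card)
    also have "\<dots> \<le> card E" using X finE by (simp add: card_mono)
    finally have "length (snd m) \<le> card E" .
    moreover have "fst m \<in> V"
    proof -
      have "hd (snd m) \<in> E" using X(3) hd_in_set[OF X(1)] by blast
      then show ?thesis using X(4) sV by simp
    qed
    ultimately show "m \<in> V \<times> ?L" using X by (cases m) auto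
  qed
  then show ?thesis using finite_subset finV fL by blast
qed

lemma finite_MB: "finite MB"
proof -
  have "MZ \<subseteq> (\<lambda>v. (v, [])) ` V" unfolding M0_def by auto
  then have "finite MZ" using finV finite_subset by blast
  then show ?thesis using finite_MP unfolding Mbar_def by simp
qed

lemma len_MB: "m \<in> MB \<Longrightarrow> length (snd m) \<le> card E"
proof -
  assume m: "m \<in> MB"
  show ?thesis
  proof (cases "snd m = []")
    case False
    then have X: "n.maxc (snd m)" "set (snd m) \<subseteq> E" using MB_nontriv m by blast+
    have "distinct (snd m)" using X n.distinct_nosucc unfolding n.maxc_def by blast
    then have "length (snd m) = card (set (snd m))" by (simp add: distinct_card)
    also have "\<dots> \<le> card E" using X finE by (simp add: card_mono)
    finally show ?thesis .
  qed simp
qed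

lemma finite_HE: "finite HE"
proof -
  have "HE \<subseteq> MB \<times> {..card E}" unfolding half_edges_def using len_MB by fastforce
  then show ?thesis using finite_MB finite_subset by blast
qed

lemma fc_HE: "h \<in> HE \<Longrightarrow> fc h \<in> HE"
  unfolding fc_def' using pt next_HE by blast

lemma fc_inj: "inj_on fc HE"
proof (rule inj_onI)
  fix x y assume xy: "x \<in> HE" "y \<in> HE" "fc x = fc y"
  then have "pt (he_next x) = pt (he_next y)" unfolding fc_def' by simp
  then have "pt (pt (he_next x)) = pt (pt (he_next y))" by simp
  then have "he_next x = he_next y" using pt_pt next_HE xy by simp
  then show "x = y" using next_inj unfolding inj_def by blast
qed

sublocale F: permA fc HE
  using finite_HE fc_HE fc_inj by unfold_locales auto

lemma retAG: assumes m: "m \<in> MB"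
  shows "F.ret he_marked (cm (AG m)) = Suc (length (snd (Fn m)))"
proof -
  have A: "AG m \<in> MB \<and> (\<forall>j. 0 < j \<and> j \<le> length (snd (Fn m)) \<longrightarrow> \<not> he_marked ((fc ^^ j) (cm (AG m))))
        \<and> (fc ^^ Suc (length (snd (Fn m)))) (cm (AG m)) = cm m" using AGface[OF m] .
  show ?thesis unfolding F.ret_def
  proof (rule Least_equality)
    show "0 < Suc (length (snd (Fn m))) \<and> he_marked ((fc ^^ Suc (length (snd (Fn m)))) (cm (AG m)))"
      using A cm[OF m] by simp
    fix y assume "0 < y \<and> he_marked ((fc ^^ y) (cm (AG m)))"
    then show "Suc (length (snd (Fn m))) \<le> y" using A by (meson not_less_eq_eq)
  qed
qed

lemma AG_MB: "m \<in> MB \<Longrightarrow> AG m \<in> MB"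
  using AGface by blast

lemma AG_back: "m \<in> MB \<Longrightarrow> (fc ^^ F.ret he_marked (cm (AG m))) (cm (AG m)) = cm m"
  using AGface retAG by simp

lemma cm_inj: "cm x = cm y \<Longrightarrow> x = y" unfolding cm_def by simp

lemma AG_inj: "inj_on AG MB"
proof (rule inj_onI)
  fix x y assume xy: "x \<in> MB" "y \<in> MB" "AG x = AG y"
  have "cm x = (fc ^^ F.ret he_marked (cm (AG x))) (cm (AG x))" using AG_back[OF xy(1)] by simp
  also have "\<dots> = (fc ^^ F.ret he_marked (cm (AG y))) (cm (AG y))" by (simp only: xy(3))
  also have "\<dots> = cm y" using AG_back[OF xy(2)] by simp
  finally show "x = y" by (rule cm_inj)
qed

sublocale G: permA AG MB
  using finite_MB AG_MB AG_inj by unfold_locales auto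

lemma orb_cm_AG: "m \<in> MB \<Longrightarrow> orb fc (cm (AG m)) = orb fc (cm m)"
proof -
  assume m: "m \<in> MB"
  have "cm m \<in> orb fc (cm (AG m))" using AG_back[OF m] F.in_orbI by metis
  then show ?thesis using F.orb_mem_eq cm AG_MB m by blast
qed

lemma orb_cm_iter: "m \<in> MB \<Longrightarrow> orb fc (cm ((AG ^^ i) m)) = orb fc (cm m)"
proof (induction i)
  case (Suc i)
  have "orb fc (cm ((AG ^^ Suc i) m)) = orb fc (cm (AG ((AG ^^ i) m)))" by simp
  also have "\<dots> = orb fc (cm ((AG ^^ i) m))" using orb_cm_AG G.iter_in Suc.prems by blast
  finally show ?case using Suc by simp
qed simp

lemma pre_AG: assumes m: "m \<in> MB"
  shows "(AG ^^ (per AG m - 1)) m \<in> MB \<and> AG ((AG ^^ (per AG m - 1)) m) = m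
       \<and> (AG ^^ (per AG m - 1)) m \<in> orb AG m"
proof -
  have p: "0 < per AG m" "(AG ^^ per AG m) m = m" using G.per m by auto
  have "AG ((AG ^^ (per AG m - 1)) m) = (AG ^^ Suc (per AG m - 1)) m" by simp
  also have "\<dots> = m" using p by simp
  finally show ?thesis using G.iter_in m G.in_orbI by blast
qed

lemma marked_orb: assumes m: "m \<in> MB"
  shows "{h \<in> orb fc (cm m). he_marked h} = cm ` orb AG m"
proof (intro equalityI subsetI)
  fix h assume "h \<in> cm ` orb AG m"
  then obtain i where hi: "h = cm ((AG ^^ i) m)" unfolding orb_def by auto
  have mi: "(AG ^^ i) m \<in> MB" using G.iter_in m by blast
  have "h \<in> orb fc (cm ((AG ^^ i) m))" using hi F.orb_self by simp
  then have "h \<in> orb fc (cm m)" using orb_cm_iter m by simp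
  moreover have "he_marked h" using cm[OF mi] hi by simp
  ultimately show "h \<in> {h \<in> orb fc (cm m). he_marked h}" by simp
next
  fix h assume "h \<in> {h \<in> orb fc (cm m). he_marked h}"
  then obtain n where hn: "h = (fc ^^ n) (cm m)" "he_marked h" unfolding orb_def by auto
  have "\<And>m. m \<in> MB \<Longrightarrow> he_marked ((fc ^^ n) (cm m)) \<Longrightarrow> (fc ^^ n) (cm m) \<in> cm ` orb AG m"
  proof (induction n rule: less_induct)
    case (less n)
    show ?case
    proof (cases "n = 0")
      case True then show ?thesis using G.orb_self by simp
    next
      case False
      define m' where "m' = (AG ^^ (per AG m - 1)) m"
      have m': "m' \<in> MB" "AG m' = m" "m' \<in> orb AG m" using pre_AG less.prems unfolding m'_def by blast+
      define r where "r = F.ret he_marked (cm m)"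
      have rb: "(fc ^^ r) (cm m) = cm m'" using AG_back[OF m'(1)] m'(2) unfolding r_def by simp
      have rle: "r \<le> n" unfolding r_def F.ret_def by (rule Least_le) (use False less.prems in simp)
      show ?thesis
      proof (cases "r = n")
        case True then show ?thesis using rb m' by auto
      next
        case F: False
        have rpos: "0 < r" using retAG[OF m'(1)] m'(2) unfolding r_def by simp
        have "(fc ^^ n) (cm m) = (fc ^^ (n - r)) ((fc ^^ r) (cm m))"
          using funpow_add_app[of "n - r" r fc "cm m"] rle by simp
        also have "\<dots> = (fc ^^ (n - r)) (cm m')" using rb by simp
        finally have e: "(fc ^^ n) (cm m) = (fc ^^ (n - r)) (cm m')" .
        have "(fc ^^ (n - r)) (cm m') \<in> cm ` orb AG m'"
          by (rule less.IH) (use rpos rle F m'(1) less.prems e in auto)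
        moreover have "orb AG m' = orb AG m" using G.orb_mem_eq less.prems m'(3) by blast
        ultimately show ?thesis using e by simp
      qed
    qed
  qed
  then show "h \<in> cm ` orb AG m" using hn m by blast
qed

end

context gent begin

abbreviation "BC \<equiv> bdry_comps V E s t R"

lemma BC_orb: "BC = orb fc ` HE"
  unfolding bdry_comps_def orb_def by simp

lemma AGk_per: "AG_k V E s t R m = per AG m"
  unfolding AG_k_def per_def by simp

lemma AGrun_orb: "m \<in> MB \<Longrightarrow> AG_run V E s t R m = orb AG m"
  unfolding AG_run_def AGk_per using G.orb_img by simp

lemma lam_ends: "B \<subseteq> HE \<Longrightarrow> n_lam_ends V E s t R B = card B"
proof -
  assume B: "B \<subseteq> HE"
  have "{h \<in> HE. \<exists>c\<in>B. he_next c = h} = he_next ` B" using B next_HE by blast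
  then show ?thesis unfolding n_lam_ends_def using card_image next_inj by (metis inj_on_subset subset_UNIV)
qed

lemma AG_orb_perm: "m \<in> MB \<Longrightarrow> AG ` orb AG m = orb AG m"
proof -
  assume m: "m \<in> MB"
  have fin: "finite (orb AG m)" using G.finite_orb m by blast
  have sub: "AG ` orb AG m \<subseteq> orb AG m"
  proof
    fix y assume "y \<in> AG ` orb AG m"
    then obtain i where "y = AG ((AG ^^ i) m)" unfolding orb_def by auto
    then show "y \<in> orb AG m" using G.in_orbI[of "Suc i" m] by simp
  qed
  have "inj_on AG (orb AG m)" using AG_inj G.orb_sub m inj_on_subset by blast
  then show ?thesis using endo_inj_surj fin sub by blast
qed

lemma comp_card: assumes m: "m \<in> MB"
  shows "card (orb fc (cm m)) = per AG m + AG_l V E s t R m"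
proof -
  have c: "cm m \<in> HE" "he_marked (cm m)" using cm[OF m] by auto
  have oM: "orb AG m \<subseteq> MB" using G.orb_sub m by blast
  have "card (orb fc (cm m)) = (\<Sum>h\<in>{h \<in> orb fc (cm m). he_marked h}. F.ret he_marked h)"
    using F.seg_sum[of "cm m" he_marked, OF c] by simp
  also have "\<dots> = (\<Sum>h\<in>cm ` orb AG m. F.ret he_marked h)" using marked_orb[OF m] by simp
  also have "\<dots> = (\<Sum>x\<in>orb AG m. F.ret he_marked (cm x))"
    by (rule sum.reindex_cong[where l=cm]) (auto intro: inj_onI cm_inj)
  also have "\<dots> = (\<Sum>x\<in>AG ` orb AG m. F.ret he_marked (cm x))" using AG_orb_perm[OF m] by simp
  also have "\<dots> = (\<Sum>x\<in>orb AG m. F.ret he_marked (cm (AG x)))"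
  proof -
    have "inj_on AG (orb AG m)" using AG_inj oM inj_on_subset by blast
    then show ?thesis using sum.reindex[of AG "orb AG m" "\<lambda>x. F.ret he_marked (cm x)"] by (simp add: comp_def)
  qed
  also have "\<dots> = (\<Sum>x\<in>orb AG m. Suc (length (snd (Fn x))))"
    by (rule sum.cong) (use retAG oM in auto)
  also have "\<dots> = (\<Sum>i\<in>{..<per AG m}. Suc (length (snd (Fn ((AG ^^ i) m)))))"
  proof -
    have "orb AG m = (\<lambda>i. (AG ^^ i) m) ` {..<per AG m}" using G.orb_img m by blast
    moreover have "inj_on (\<lambda>i. (AG ^^ i) m) {..<per AG m}" using G.inj_per m by blast
    ultimately show ?thesis by (simp add: sum.reindex)
  qed
  also have "\<dots> = per AG m + AG_l V E s t R m"
    unfolding AG_l_def AGk_per by (simp only: Suc_eq_plus1_left sum.distrib) simp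
  finally show ?thesis .
qed

lemma comp_marked: assumes m: "m \<in> MB"
  shows "n_marked (orb fc (cm m)) = per AG m"
proof -
  have "n_marked (orb fc (cm m)) = card (cm ` orb AG m)" unfolding n_marked_def using marked_orb[OF m] by simp
  also have "\<dots> = card (orb AG m)" by (rule card_image) (auto intro: inj_onI cm_inj)
  also have "\<dots> = per AG m" using G.card_orb m by blast
  finally show ?thesis .
qed

lemma comp_cval: assumes m: "m \<in> MB"
  shows "c_val V E s t R (orb fc (cm m)) = int (AG_l V E s t R m)"
proof -
  have "orb fc (cm m) \<subseteq> HE" using F.orb_sub cm[OF m] by blast
  then show ?thesis unfolding c_val_def using lam_ends comp_card[OF m] comp_marked[OF m] by simp
qed

lemma marked_is_cm: "h \<in> HE \<Longrightarrow> he_marked h \<Longrightarrow> fst h \<in> MB \<and> h = cm (fst h)"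
  unfolding half_edges_def he_marked_def cm_def by (cases h) auto

lemma BC_marked: assumes B: "B \<in> BC" and c: "c \<in> B" "he_marked c"
  shows "fst c \<in> MB \<and> B = orb fc (cm (fst c))"
proof -
  obtain h where h: "h \<in> HE" "B = orb fc h" using B BC_orb by auto
  have cH: "c \<in> HE" using F.orb_sub h c by blast
  have "fst c \<in> MB" "c = cm (fst c)" using marked_is_cm[OF cH c(2)] by auto
  moreover have "orb fc c = B" using F.orb_mem_eq h c by blast
  ultimately show ?thesis by simp
qed

lemma nmarked0: "B \<in> BC \<Longrightarrow> n_marked B = 0 \<longleftrightarrow> (\<forall>c\<in>B. \<not> he_marked c)"
proof -
  assume B: "B \<in> BC"
  then obtain h where h: "h \<in> HE" "B = orb fc h" using BC_orb by auto
  have "finite B" using F.finite_orb h by blast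
  then show ?thesis unfolding n_marked_def by auto
qed

lemma Psi: assumes m: "m \<in> MB" shows "{x \<in> MB. cm x \<in> orb fc (cm m)} = orb AG m"
proof (intro equalityI subsetI)
  fix x assume x: "x \<in> {x \<in> MB. cm x \<in> orb fc (cm m)}"
  then have "cm x \<in> {h \<in> orb fc (cm m). he_marked h}" using cm by auto
  then have "cm x \<in> cm ` orb AG m" using marked_orb[OF m] by simp
  then obtain z where z: "cm x = cm z" "z \<in> orb AG m" by (rule imageE)
  then show "x \<in> orb AG m" using cm_inj by metis
next
  fix x assume x: "x \<in> orb AG m"
  then have "x \<in> MB" using G.orb_sub m by blast
  moreover have "cm x \<in> cm ` orb AG m" using x by simp
  then have "cm x \<in> orb fc (cm m)" using marked_orb[OF m] by blast
  ultimately show "x \<in> {x \<in> MB. cm x \<in> orb fc (cm m)}" by simp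
qed

lemma marked_count: assumes x: "x \<noteq> 0"
  shows "card {B \<in> BC. n_marked B = x \<and> c_val V E s t R B = int y}
       = card (AG_run V E s t R ` {m \<in> MB. AG_k V E s t R m = x \<and> AG_l V E s t R m = y})"
proof -
  let ?S = "{B \<in> BC. n_marked B = x \<and> c_val V E s t R B = int y}"
  let ?T = "{m \<in> MB. AG_k V E s t R m = x \<and> AG_l V E s t R m = y}"
  define Psi where "Psi B = {m \<in> MB. cm m \<in> B}" for B
  have rep: "\<And>B. B \<in> ?S \<Longrightarrow> \<exists>m\<in>MB. B = orb fc (cm m)"
  proof -
    fix B assume B: "B \<in> ?S"
    have "B \<in> BC" "n_marked B \<noteq> 0" using B x by auto
    then have "\<exists>c\<in>B. he_marked c"
    proof -
      have i: "(n_marked B = 0) = (\<forall>c\<in>B. \<not> he_marked c)" using nmarked0 \<open>B \<in> BC\<close> by blast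
      then show ?thesis using \<open>n_marked B \<noteq> 0\<close> by blast
    qed
    then obtain c where "c \<in> B" "he_marked c" by blast
    then show "\<exists>m\<in>MB. B = orb fc (cm m)" using BC_marked B by blast
  qed
  have inj: "inj_on Psi ?S"
  proof (rule inj_onI)
    fix B1 B2 assume B: "B1 \<in> ?S" "B2 \<in> ?S" "Psi B1 = Psi B2"
    obtain m1 where m1: "m1 \<in> MB" "B1 = orb fc (cm m1)" using rep B by blast
    obtain m2 where m2: "m2 \<in> MB" "B2 = orb fc (cm m2)" using rep B by blast
    have "m1 \<in> Psi B1" unfolding Psi_def using m1 F.orb_self by simp
    then have "cm m1 \<in> B2" using B unfolding Psi_def by simp
    then have "orb fc (cm m1) = B2" using F.orb_mem_eq m2 cm by blast
    then show "B1 = B2" using m1 by simp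
  qed
  have img: "Psi ` ?S = AG_run V E s t R ` ?T"
  proof (intro equalityI subsetI)
    fix P assume "P \<in> Psi ` ?S"
    then obtain B where B: "B \<in> ?S" "P = Psi B" by blast
    obtain m where m: "m \<in> MB" "B = orb fc (cm m)" using rep B by blast
    have "P = orb AG m" using B m Psi unfolding Psi_def by simp
    also have "\<dots> = AG_run V E s t R m" using AGrun_orb m by simp
    finally have "P = AG_run V E s t R m" .
    moreover have "m \<in> ?T" using B m comp_marked comp_cval AGk_per by auto
    ultimately show "P \<in> AG_run V E s t R ` ?T" by blast
  next
    fix P assume "P \<in> AG_run V E s t R ` ?T"
    then obtain m where m: "m \<in> ?T" "P = AG_run V E s t R m" by blast
    have mB: "m \<in> MB" using m by simp
    have "orb fc (cm m) \<in> BC" using BC_orb cm[OF mB] by auto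
    then have "orb fc (cm m) \<in> ?S" using m comp_marked[OF mB] comp_cval[OF mB] AGk_per by auto
    moreover have "P = Psi (orb fc (cm m))" using m Psi[OF mB] AGrun_orb[OF mB] unfolding Psi_def by simp
    ultimately show "P \<in> Psi ` ?S" by blast
  qed
  show ?thesis using card_image[OF inj] img by simp
qed

lemma part2: assumes B: "B \<in> BC" and nz: "n_marked B \<noteq> 0"
  shows "c_val V E s t R B = (\<Sum>c \<in> {c \<in> B. he_marked c}. int (piece_sides V E s t R c) - 2)"
proof -
  obtain c where c: "c \<in> B" "he_marked c" using nmarked0[OF B] nz by auto
  have X: "fst c \<in> MB" "B = orb fc (cm (fst c))" using BC_marked[OF B c] by auto
  have cc: "c = cm (fst c)" using marked_is_cm c X F.orb_sub cm by blast
  have cH: "cm (fst c) \<in> HE" "he_marked (cm (fst c))" using cm X by auto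
  have sub: "B \<subseteq> HE" using X F.orb_sub cH by blast
  have fin: "finite {c \<in> B. he_marked c}" using F.finite_orb X cH by auto
  have ps: "\<And>c. piece_sides V E s t R c = F.ret he_marked c + 1"
    unfolding piece_sides_def F.ret_def by simp
  have "(\<Sum>c \<in> {c \<in> B. he_marked c}. int (piece_sides V E s t R c) - 2)
      = (\<Sum>c \<in> {c \<in> B. he_marked c}. int (F.ret he_marked c) - 1)" unfolding ps by simp
  also have "\<dots> = (\<Sum>c \<in> {c \<in> B. he_marked c}. int (F.ret he_marked c)) - int (card {c \<in> B. he_marked c})"
    by (simp add: sum_subtractf)
  also have "(\<Sum>c \<in> {c \<in> B. he_marked c}. int (F.ret he_marked c)) = int (card B)"
    using F.seg_sum[of "cm (fst c)" he_marked, OF cH] X by (simp flip: of_nat_sum)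
  finally show ?thesis unfolding c_val_def n_marked_def using lam_ends[OF sub] by simp
qed

end

context gent begin

definition ar :: "('v,'a) qpath \<times> nat \<Rightarrow> 'a" where "ar h = the (outA h)"

abbreviation "FRC \<equiv> full_rel_cycles E R"

lemma unm_oh: "h \<in> HE \<Longrightarrow> \<not> he_marked h \<Longrightarrow> ar h \<in> E \<and> h = oh (ar h) \<and> outA h = Some (ar h)"
proof -
  assume h: "h \<in> HE" "\<not> he_marked h"
  then obtain a where a: "outA h = Some a" using marked_iff by (cases "outA h") auto
  have "a \<in> E" using outA_Some h a by blast
  moreover have "h = oh a" using oh_eq h a by blast
  ultimately show ?thesis using a unfolding ar_def by simp
qed

lemma unm_step: assumes h: "h \<in> HE" "\<not> he_marked h" and f: "\<not> he_marked (fc h)"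
  shows "(ar h, ar (fc h)) \<in> R"
proof (rule ccontr)
  assume nr: "(ar h, ar (fc h)) \<notin> R"
  define a where "a = ar h"
  have A: "a \<in> E" "h = oh a" using unm_oh h unfolding a_def by blast+
  have fh: "fc h \<in> HE" using fc_HE h by blast
  define b where "b = ar (fc h)"
  have B: "b \<in> E" "fc h = oh b" using unm_oh fh f unfolding b_def by blast+
  have fe: "fc h = pt (ih a)" using fc_oh A by simp
  have "lab (fc h) = t a" using fe pt ih A label_ih by simp
  then have tb: "t a = s b" using B label_oh by simp
  have "Qn a b" using A B tb nr unfolding Qn_def a_def b_def by simp
  then have "ih a = oh b" by (rule Qn_join)
  then have "pt (ih a) = ih a" using fe B by simp
  then show False using pt ih A by metis
qed

lemma R_fc: "(a,b) \<in> R \<Longrightarrow> fc (oh a) = oh b"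
  using fc_oh R_step Rsub by simp

lemma frc_props: "cs \<in> FRC \<Longrightarrow> cs \<noteq> [] \<and> distinct cs \<and> set cs \<subseteq> E
   \<and> (\<forall>j < length cs. (cs ! j, cs ! (Suc j mod length cs)) \<in> R)"
  unfolding full_rel_cycles_def by simp

lemma cyc_iter: assumes cs: "cs \<in> FRC"
  shows "(fc ^^ i) (oh (cs ! 0)) = oh (cs ! (i mod length cs))"
proof (induction i)
  case 0 then show ?case by simp
next
  case (Suc i)
  have P: "cs \<noteq> []" "\<forall>j < length cs. (cs ! j, cs ! (Suc j mod length cs)) \<in> R" using frc_props[OF cs] by auto
  have "(fc ^^ Suc i) (oh (cs ! 0)) = fc (oh (cs ! (i mod length cs)))" using Suc by simp
  also have "\<dots> = oh (cs ! (Suc (i mod length cs) mod length cs))"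
    using R_fc P by simp
  also have "Suc (i mod length cs) mod length cs = Suc i mod length cs" by (simp add: mod_Suc_eq)
  finally show ?case .
qed

lemma cyc_comp: assumes cs: "cs \<in> FRC"
  shows "orb fc (oh (cs ! 0)) = oh ` set cs" "oh (cs ! 0) \<in> HE"
proof -
  have P: "cs \<noteq> []" "set cs \<subseteq> E" using frc_props[OF cs] by auto
  show "orb fc (oh (cs ! 0)) = oh ` set cs"
  proof (intro equalityI subsetI)
    fix h assume "h \<in> orb fc (oh (cs ! 0))"
    then obtain i where "h = (fc ^^ i) (oh (cs ! 0))" unfolding orb_def by auto
    then have "h = oh (cs ! (i mod length cs))" using cyc_iter cs by simp
    moreover have "cs ! (i mod length cs) \<in> set cs" using P by simp
    ultimately show "h \<in> oh ` set cs" by blast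
  next
    fix h assume "h \<in> oh ` set cs"
    then obtain j where j: "j < length cs" "h = oh (cs ! j)" by (metis imageE in_set_conv_nth)
    then have "h = (fc ^^ j) (oh (cs ! 0))" using cyc_iter cs by simp
    then show "h \<in> orb fc (oh (cs ! 0))" unfolding orb_def by simp
  qed
  show "oh (cs ! 0) \<in> HE" using P oh by (simp add: subset_iff)
qed

lemma oh_inj: "inj_on oh E"
proof (rule inj_onI)
  fix x y assume A: "x \<in> E" "y \<in> E" "oh x = oh y"
  have 1: "outA (oh x) = Some x" and 2: "outA (oh y) = Some y" using oh A by blast+
  have "Some x = outA (oh x)" using 1 by simp
  also have "\<dots> = outA (oh y)" using A(3) by (rule arg_cong)
  also have "\<dots> = Some y" using 2 by simp
  finally show "x = y" by simp
qed

lemma ar_oh: "a \<in> E \<Longrightarrow> ar (oh a) = a"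
  unfolding ar_def using oh by simp

lemma unm_comp_cyc: assumes h: "h \<in> HE" and un: "\<forall>c\<in>orb fc h. \<not> he_marked c"
  shows "\<exists>cs\<in>FRC. length cs = card (orb fc h) \<and> set cs = ar ` orb fc h"
proof -
  define p where "p = per fc h"
  define g where "g i = ar ((fc ^^ i) h)" for i
  define cs where "cs = map g [0..<p]"
  have pp: "0 < p" using F.per h unfolding p_def by blast
  have oi: "orb fc h = (\<lambda>i. (fc ^^ i) h) ` {..<p}" using F.orb_img h unfolding p_def by blast
  have inB: "\<And>i. (fc ^^ i) h \<in> orb fc h" by (rule F.in_orbI)
  have inH: "\<And>i. (fc ^^ i) h \<in> HE" using F.iter_in h by blast
  have ohg: "\<And>i. g i \<in> E \<and> (fc ^^ i) h = oh (g i)" using unm_oh inH inB un unfolding g_def by blast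
  have injg: "inj_on g {0..<p}"
  proof (rule inj_onI)
    fix i j assume ij: "i \<in> {0..<p}" "j \<in> {0..<p}" "g i = g j"
    then have "(fc ^^ i) h = (fc ^^ j) h" using ohg by metis
    then show "i = j" using F.inj_per[OF h] ij unfolding p_def inj_on_def by auto
  qed
  have dist: "distinct cs" unfolding cs_def using injg by (simp add: distinct_map)
  have len: "length cs = p" unfolding cs_def by simp
  have setcs: "set cs = ar ` orb fc h"
  proof -
    have "set cs = g ` {0..<p}" unfolding cs_def by simp
    also have "\<dots> = ar ` (\<lambda>i. (fc ^^ i) h) ` {..<p}" unfolding g_def by (auto simp: atLeast0LessThan)
    finally show ?thesis using oi by simp
  qed
  have sE: "set cs \<subseteq> E" using ohg unfolding cs_def by auto
  have R: "\<forall>j < length cs. (cs ! j, cs ! (Suc j mod length cs)) \<in> R"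
  proof (intro allI impI)
    fix j assume j: "j < length cs"
    have m: "Suc j mod p < p" using pp by simp
    have e1: "cs ! j = ar ((fc ^^ j) h)" using j len unfolding cs_def g_def by simp
    have e2: "cs ! (Suc j mod length cs) = ar ((fc ^^ (Suc j mod p)) h)" using m len unfolding cs_def g_def by simp
    have "(fc ^^ (Suc j mod p)) h = (fc ^^ Suc j) h" using F.iter_mod[OF h, of "Suc j"] unfolding p_def by simp
    then have e3: "cs ! (Suc j mod length cs) = ar (fc ((fc ^^ j) h))" using e2 by simp
    have "(ar ((fc ^^ j) h), ar (fc ((fc ^^ j) h))) \<in> R"
    proof (rule unm_step)
      show "(fc ^^ j) h \<in> HE" by (rule inH)
      show "\<not> he_marked ((fc ^^ j) h)" using un inB by blast
      show "\<not> he_marked (fc ((fc ^^ j) h))" using un inB[of "Suc j"] by simp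
    qed
    then show "(cs ! j, cs ! (Suc j mod length cs)) \<in> R" using e1 e3 by simp
  qed
  have "cs \<in> FRC" unfolding full_rel_cycles_def using pp len dist sE R by auto
  moreover have "length cs = card (orb fc h)" using len F.card_orb h unfolding p_def by simp
  ultimately show ?thesis using setcs by blast
qed

lemma rot_class_rotate: assumes ne: "cs \<noteq> []" shows "rot_class (rotate a cs) = rot_class cs"
proof -
  let ?L = "length cs"
  have "rot_class (rotate a cs) = range (\<lambda>i. rotate (i + a) cs)"
    unfolding rot_class_def by (simp add: rotate_rotate)
  also have "\<dots> = range (\<lambda>i. rotate i cs)"
  proof (intro equalityI subsetI)
    fix x assume "x \<in> range (\<lambda>i. rotate (i + a) cs)" then show "x \<in> range (\<lambda>i. rotate i cs)" by auto
  next
    fix x assume "x \<in> range (\<lambda>i. rotate i cs)"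
    then obtain j where x: "x = rotate j cs" by auto
    have "(j + (?L - 1) * a + a) mod ?L = j mod ?L"
    proof -
      have e: "j + (?L - 1) * a + a = j + ?L * a" using ne by (cases ?L) (auto simp: algebra_simps)
      show ?thesis by (subst e) simp
    qed
    then have "rotate (j + (?L - 1) * a + a) cs = rotate j cs" by (metis rotate_conv_mod)
    then show "x \<in> range (\<lambda>i. rotate (i + a) cs)" using x by (metis rangeI)
  qed
  finally show ?thesis unfolding rot_class_def .
qed

lemma key_rot: assumes c1: "cs1 \<in> FRC" and c2: "cs2 \<in> FRC" and st: "set cs1 = set cs2"
  shows "rot_class cs1 = rot_class cs2"
proof -
  have P1: "cs1 \<noteq> []" "distinct cs1" "\<forall>j < length cs1. (cs1 ! j, cs1 ! (Suc j mod length cs1)) \<in> R" using frc_props[OF c1] by auto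
  have P2: "cs2 \<noteq> []" "distinct cs2" "\<forall>j < length cs2. (cs2 ! j, cs2 ! (Suc j mod length cs2)) \<in> R" using frc_props[OF c2] by auto
  define L where "L = length cs1"
  have LL: "length cs2 = L" using st P1 P2 distinct_card unfolding L_def by metis
  have Lp: "0 < L" using P1 unfolding L_def by simp
  have "cs2 ! 0 \<in> set cs1" using st P2 by simp
  then obtain a where a: "a < L" "cs1 ! a = cs2 ! 0" unfolding L_def by (metis in_set_conv_nth)
  have nth: "\<And>i. i < L \<Longrightarrow> cs2 ! i = cs1 ! ((a + i) mod L)"
  proof -
    fix i show "i < L \<Longrightarrow> cs2 ! i = cs1 ! ((a + i) mod L)"
    proof (induction i)
      case 0 then show ?case using a by simp
    next
      case (Suc i)
      then have IH: "cs2 ! i = cs1 ! ((a + i) mod L)" by simp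
      have q2: "(cs2 ! i, cs2 ! Suc i) \<in> R" using P2(3) Suc.prems LL by (metis Suc_lessD mod_less)
      have q1: "(cs1 ! ((a + i) mod L), cs1 ! (Suc ((a + i) mod L) mod L)) \<in> R"
        using P1(3) Lp unfolding L_def by simp
      have "cs2 ! Suc i = cs1 ! (Suc ((a + i) mod L) mod L)" using r.su q1 q2 IH unfolding Qr_def by metis
      also have "Suc ((a + i) mod L) mod L = (a + Suc i) mod L" by (simp add: mod_Suc_eq)
      finally show ?case .
    qed
  qed
  have "cs2 = rotate a cs1"
  proof (rule nth_equalityI)
    show "length cs2 = length (rotate a cs1)" using LL unfolding L_def by simp
    fix i assume "i < length cs2"
    then show "cs2 ! i = rotate a cs1 ! i" using nth LL unfolding L_def by (simp add: nth_rotate)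
  qed
  then show ?thesis using rot_class_rotate[OF P1(1), of a] by simp
qed

lemma set_rot_class: "\<Union> (set ` rot_class cs) = set cs"
  unfolding rot_class_def by auto

lemma card_rot: "card (rot_class ` S) = card (set ` S)" if "S \<subseteq> FRC" for S
proof -
  let ?phi = "\<lambda>C. \<Union> (set ` C)"
  have inj: "inj_on ?phi (rot_class ` S)"
  proof (rule inj_onI)
    fix C1 C2 assume C: "C1 \<in> rot_class ` S" "C2 \<in> rot_class ` S" "?phi C1 = ?phi C2"
    then obtain cs1 cs2 where cs: "cs1 \<in> S" "C1 = rot_class cs1" "cs2 \<in> S" "C2 = rot_class cs2" by blast
    then have "set cs1 = set cs2" using C set_rot_class by metis
    then show "C1 = C2" using key_rot cs that by blast
  qed
  have "?phi ` rot_class ` S = (\<lambda>cs. ?phi (rot_class cs)) ` S" by (simp add: image_image)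
  also have "\<dots> = set ` S" by (simp add: set_rot_class)
  finally have "?phi ` rot_class ` S = set ` S" .
  then show ?thesis using card_image[OF inj] by simp
qed

lemma unmarked_count:
  "card {B \<in> BC. n_marked B = 0 \<and> c_val V E s t R B = int y}
     = card (rot_class ` {cs \<in> FRC. length cs = y})"
proof -
  let ?S = "{B \<in> BC. n_marked B = 0 \<and> c_val V E s t R B = int y}"
  let ?C = "{cs \<in> FRC. length cs = y}"
  have rep: "\<And>B. B \<in> ?S \<Longrightarrow> \<exists>h\<in>HE. B = orb fc h \<and> (\<forall>c\<in>B. \<not> he_marked c) \<and> card B = y"
  proof -
    fix B assume B: "B \<in> ?S"
    obtain h where h: "h \<in> HE" "B = orb fc h" using B BC_orb by auto
    have un: "\<forall>c\<in>B. \<not> he_marked c" using nmarked0 B by blast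
    have "B \<subseteq> HE" using F.orb_sub h by blast
    then have "card B = y" using B lam_ends unfolding c_val_def by simp
    then show "\<exists>h\<in>HE. B = orb fc h \<and> (\<forall>c\<in>B. \<not> he_marked c) \<and> card B = y" using h un by blast
  qed
  have inj: "inj_on (\<lambda>B. ar ` B) ?S"
  proof (rule inj_onI)
    fix B1 B2 assume B: "B1 \<in> ?S" "B2 \<in> ?S" "ar ` B1 = ar ` B2"
    have e: "\<And>B. B \<in> ?S \<Longrightarrow> B = oh ` ar ` B"
    proof -
      fix B assume "B \<in> ?S"
      then obtain h where h: "h \<in> HE" "B = orb fc h" "\<forall>c\<in>B. \<not> he_marked c" using rep by blast
      have "\<forall>c\<in>B. c = oh (ar c)" using unm_oh h F.orb_sub by blast
      then show "B = oh ` ar ` B" by (auto simp: image_image)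
    qed
    show "B1 = B2" using e[OF B(1)] e[OF B(2)] B(3) by metis
  qed
  have img: "(\<lambda>B. ar ` B) ` ?S = set ` ?C"
  proof (intro equalityI subsetI)
    fix X assume "X \<in> (\<lambda>B. ar ` B) ` ?S"
    then obtain B where B: "B \<in> ?S" "X = ar ` B" by blast
    then obtain h where h: "h \<in> HE" "B = orb fc h" "\<forall>c\<in>B. \<not> he_marked c" "card B = y" using rep by blast
    obtain cs where cs: "cs \<in> FRC" "length cs = card (orb fc h)" "set cs = ar ` orb fc h"
      using unm_comp_cyc h by blast
    then show "X \<in> set ` ?C" using B h by auto
  next
    fix X assume "X \<in> set ` ?C"
    then obtain cs where cs: "cs \<in> FRC" "length cs = y" "X = set cs" by blast
    have P: "cs \<noteq> []" "distinct cs" "set cs \<subseteq> E" using frc_props[OF cs(1)] by auto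
    define B where "B = orb fc (oh (cs ! 0))"
    have B1: "B = oh ` set cs" "oh (cs ! 0) \<in> HE" using cyc_comp[OF cs(1)] unfolding B_def by auto
    have BBC: "B \<in> BC" using B1 BC_orb unfolding B_def by auto
    have sub: "B \<subseteq> HE" using F.orb_sub B1 unfolding B_def by blast
    have un: "\<forall>c\<in>B. \<not> he_marked c"
    proof
      fix c assume "c \<in> B"
      then obtain a where a: "a \<in> set cs" "c = oh a" using B1 by blast
      then have "a \<in> E" using P by blast
      then have "oh a \<in> HE" "outA (oh a) = Some a" using oh by auto
      then show "\<not> he_marked c" using marked_iff a by simp
    qed
    have cardB: "card B = y"
    proof -
      have "card B = card (set cs)" using B1 card_image oh_inj P inj_on_subset by metis
      also have "\<dots> = y" using P cs distinct_card by metis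
      finally show ?thesis .
    qed
    have "n_marked B = 0" using un BBC nmarked0 by blast
    moreover have "c_val V E s t R B = int y" using \<open>n_marked B = 0\<close> lam_ends[OF sub] cardB
      unfolding c_val_def by simp
    ultimately have "B \<in> ?S" using BBC by simp
    moreover have "ar ` B = X"
    proof -
      have "(\<lambda>x. ar (oh x)) ` set cs = (\<lambda>x. x) ` set cs" by (rule image_cong) (use ar_oh P in auto)
      then show ?thesis using B1 cs by (simp add: image_image)
    qed
    ultimately show "X \<in> (\<lambda>B. ar ` B) ` ?S" by blast
  qed
  have "card ?S = card (set ` ?C)" using card_image[OF inj] img by simp
  also have "\<dots> = card (rot_class ` ?C)" using card_rot[of ?C] by simp
  finally show ?thesis .
qed

end

theorem mainTheorem14:
  fixes V :: "'v set" and E :: "'a set" and s t :: "'a \<Rightarrow> 'v" and R :: "('a \<times> 'a) set"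
  assumes "gentle V E s t R" and "connected_quiver V E s t" and "E \<noteq> {}"
  shows "(\<forall>x y. AG_phi V E s t R x y
            = card {B \<in> bdry_comps V E s t R. n_marked B = x \<and> c_val V E s t R B = int y})
       \<and> (\<forall>B \<in> bdry_comps V E s t R. n_marked B \<noteq> 0 \<longrightarrow>
            c_val V E s t R B = (\<Sum>c \<in> {c \<in> B. he_marked c}. int (piece_sides V E s t R c) - 2))"
proof -
  interpret gent V E s t R using assms by unfold_locales
  show ?thesis
  proof (intro conjI allI ballI impI)
    fix x y
    show "AG_phi V E s t R x y
            = card {B \<in> bdry_comps V E s t R. n_marked B = x \<and> c_val V E s t R B = int y}"
    proof (cases "x = 0")
      case True
      have e: "{m \<in> Mbar V E s t R. AG_k V E s t R m = 0 \<and> AG_l V E s t R m = y} = {}"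
        using AGk_per G.per by fastforce
      have "AG_phi V E s t R 0 y = card (rot_class ` {cs \<in> full_rel_cycles E R. length cs = y})"
        unfolding AG_phi_def e by simp
      then show ?thesis using True unmarked_count by simp
    next
      case False
      then show ?thesis unfolding AG_phi_def using marked_count[OF False] by simp
    qed
  next
    fix B assume "B \<in> bdry_comps V E s t R" "n_marked B \<noteq> 0"
    then show "c_val V E s t R B = (\<Sum>c \<in> {c \<in> B. he_marked c}. int (piece_sides V E s t R c) - 2)"
      by (rule part2)
  qed
qed

end
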